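(* Let $A$ be an alphabet and let $K$ be one of $K_1$, $K_2$, $K_3$. The quantitative language-inclusion problem for weighted Büchi automata over $K$ and $A$ is decidable: there is an algorithm that, given weighted Büchi automata $\mathcal{N},\widehat{\mathcal{N}}$ over $K$ and $A$, decides whether $(\|\mathcal{N}\|,w)\le(\|\widehat{\mathcal{N}}\|,w)$ for all $w\in A^{\omega}$.
   Context: $\overline{\mathbb{Q}}=\mathbb{Q}\cup\{\infty,-\infty\}$ with its usual order. In each of $K_1,K_2,K_3$ the carrier is $\overline{\mathbb{Q}}$, addition (binary and infinitary) is $\sup$ with zero $-\infty$, product is $\inf$ with unit $\infty$; the $\omega$-valuation functions on sequences $(d_i)_{i\ge0}$ with finitely many values are: for $K_1$, $\mathrm{liminf}$: $-\infty$ if some $d_i=-\infty$; $\infty$ if all $d_i=\infty$; $\sup_{i\ge0}\inf\{d_k\mid k\ge i,d_k\ne\infty\}$ if no $-\infty$ and infinitely many $d_i\ne\infty$; $\inf\{d_i\mid d_i\ne\infty\}$ otherwise. For $K_2$, $\mathrm{limsup}$: $-\infty$ if some $d_i=-\infty$; $\infty$ if all $d_i=\infty$; $\inf_{i\ge0}\sup\{d_k\mid k\ge i,d_k\ne\infty\}$ if no $-\infty$ and infinitely many $d_i\ne\infty$; $\sup\{d_i\mid d_i\ne\infty\}$ otherwise. For $K_3$, $\sup_{-\infty}$: $-\infty$ if some $d_i=-\infty$; $\infty$ if all $d_i=\infty$; $\sup\{d_k\mid d_k\ne\infty\}$ otherwise. A weighted Büchi automaton over $A$ and $K$ is $(Q,wt,I,F)$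 with finite $Q$, $wt:Q\times A\times Q\to\overline{\mathbb{Q}}$, $I,F\subseteq Q$; the weight of a path $(q_j,a_j,q_{j+1})_{j\ge0}$ is the $\omega$-valuation of $(wt(q_j,a_j,q_{j+1}))_j$; a path is successful if $q_0\in I$ and some state of $F$ occurs infinitely often; the behavior $(\|\mathcal{A}\|,w)$ is the supremum of the weights of successful paths over $w$ ($-\infty$ if none). *)

theory Defs
  imports Complex_Main "HOL-Library.Extended_Real" "HOL-Library.Nat_Bijection"
begin

datatype qbar = MInf | Fin rat | PInf

text \<open>Order-embedding of the extended rationals into the extended reals; all
  semiring operations (sup, inf) and valuations are order-theoretic and applied to
  finitely many values, so they may be computed in ereal.\<close>
fun to_ereal :: "qbar \<Rightarrow> ereal" where
  "to_ereal MInf = - \<infinity>"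
| "to_ereal (Fin r) = ereal (of_rat r)"
| "to_ereal PInf = \<infinity>"

definition liminf_val :: "(nat \<Rightarrow> ereal) \<Rightarrow> ereal" where
  "liminf_val d =
     (if \<exists>i. d i = - \<infinity> then - \<infinity>
      else if \<forall>i. d i = \<infinity> then \<infinity>
      else if infinite {i. d i \<noteq> \<infinity>}
        then (SUP i. INF k \<in> {k. k \<ge> i \<and> d k \<noteq> \<infinity>}. d k)
      else (INF i \<in> {i. d i \<noteq> \<infinity>}. d i))"

definition limsup_val :: "(nat \<Rightarrow> ereal) \<Rightarrow> ereal" where
  "limsup_val d =
     (if \<exists>i. d i = - \<infinity> then - \<infinity>
      else if \<forall>i. d i = \<infinity> then \<infinity>
      else if infinite {i. d i \<noteq> \<infinity>}
        then (INF i. SUP k \<in> {k. k \<ge> i \<and> d k \<noteq> \<infinity>}. d k)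
      else (SUP i \<in> {i. d i \<noteq> \<infinity>}. d i))"

definition supminf_val :: "(nat \<Rightarrow> ereal) \<Rightarrow> ereal" where
  "supminf_val d =
     (if \<exists>i. d i = - \<infinity> then - \<infinity>
      else if \<forall>i. d i = \<infinity> then \<infinity>
      else (SUP k \<in> {k. d k \<noteq> \<infinity>}. d k))"

datatype valuation_kind = K1 | K2 | K3

fun omega_val :: "valuation_kind \<Rightarrow> (nat \<Rightarrow> ereal) \<Rightarrow> ereal" where
  "omega_val K1 d = liminf_val d"
| "omega_val K2 d = limsup_val d"
| "omega_val K3 d = supminf_val d"

text \<open>The alphabet is A = {0..<m}; states are {0..<nstates}.
  wt q a p is the weight of transition (q,a,p).\<close>
datatype wba = WBA (nstates: nat) (wt: "nat \<Rightarrow> nat \<Rightarrow> nat \<Rightarrow> qbar")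
                   (init: "nat set") (fin: "nat set")

definition wf_wba :: "wba \<Rightarrow> bool" where
  "wf_wba N \<longleftrightarrow> init N \<subseteq> {..<nstates N} \<and> fin N \<subseteq> {..<nstates N}"

definition successful_run :: "wba \<Rightarrow> (nat \<Rightarrow> nat) \<Rightarrow> bool" where
  "successful_run N \<rho> \<longleftrightarrow> (\<forall>j. \<rho> j < nstates N) \<and> \<rho> 0 \<in> init N
     \<and> (\<exists>q\<in>fin N. \<exists>\<^sub>\<infinity>j. \<rho> j = q)"

definition run_weight :: "valuation_kind \<Rightarrow> wba \<Rightarrow> (nat \<Rightarrow> nat) \<Rightarrow> (nat \<Rightarrow> nat) \<Rightarrow> ereal" where
  "run_weight K N w \<rho> = omega_val K (\<lambda>j. to_ereal (wt N (\<rho> j) (w j) (\<rho> (Suc j))))"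

text \<open>Behaviour: supremum (in the semiring: sup, zero = -infinity) over successful paths.\<close>
definition behavior :: "valuation_kind \<Rightarrow> wba \<Rightarrow> (nat \<Rightarrow> nat) \<Rightarrow> ereal" where
  "behavior K N w = (SUP \<rho> \<in> {\<rho>. successful_run N \<rho>}. run_weight K N w \<rho>)"

datatype recf = Zero | Succ | Proj nat | Comp recf "recf list" | PrimRec recf recf | Mn recf

inductive eval_recf :: "recf \<Rightarrow> nat list \<Rightarrow> nat \<Rightarrow> bool" where
  zero: "eval_recf Zero xs 0"
| succ: "eval_recf Succ (x # xs) (Suc x)"
| proj: "i < length xs \<Longrightarrow> eval_recf (Proj i) xs (xs ! i)"
| comp: "length ys = length fs \<Longrightarrow> (\<forall>i<length fs. eval_recf (fs ! i) xs (ys ! i))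
          \<Longrightarrow> eval_recf g ys r \<Longrightarrow> eval_recf (Comp g fs) xs r"
| pr0: "eval_recf f xs r \<Longrightarrow> eval_recf (PrimRec f g) (0 # xs) r"
| prS: "eval_recf (PrimRec f g) (n # xs) r \<Longrightarrow> eval_recf g (n # r # xs) s
          \<Longrightarrow> eval_recf (PrimRec f g) (Suc n # xs) s"
| mn: "eval_recf f (n # xs) 0 \<Longrightarrow> (\<forall>k<n. \<exists>v. v > 0 \<and> eval_recf f (k # xs) v)
          \<Longrightarrow> eval_recf (Mn f) xs n"

fun enc_qbar :: "qbar \<Rightarrow> nat" where
  "enc_qbar MInf = 0"
| "enc_qbar PInf = 1"
| "enc_qbar (Fin r) = 2 + prod_encode (int_encode (fst (quotient_of r)), int_encode (snd (quotient_of r)))"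

definition enc_wba :: "nat \<Rightarrow> wba \<Rightarrow> nat" where
  "enc_wba m N = list_encode
     [nstates N,
      list_encode [enc_qbar (wt N q a p). q \<leftarrow> [0..<nstates N], a \<leftarrow> [0..<m], p \<leftarrow> [0..<nstates N]],
      list_encode (filter (\<lambda>q. q \<in> init N) [0..<nstates N]),
      list_encode (filter (\<lambda>q. q \<in> fin N) [0..<nstates N])]"

definition enc_pair :: "nat \<Rightarrow> wba \<Rightarrow> wba \<Rightarrow> nat" where
  "enc_pair m N N' = prod_encode (enc_wba m N, enc_wba m N')"

end

theory Submission
  imports Defs "HOL-Library.Ramsey"
begin


section \<open>Recursive functions with environments\<close>

definition econs :: "nat \<Rightarrow> (nat \<Rightarrow> nat) \<Rightarrow> nat \<Rightarrow> nat" where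
  "econs x e = (\<lambda>i. case i of 0 \<Rightarrow> x | Suc j \<Rightarrow> e j)"

lemma econs_0 [simp]: "econs x e 0 = x" and econs_Suc [simp]: "econs x e (Suc j) = e j"
  by (simp_all add: econs_def)

lemma econs_eta: "(\<lambda>j. econs x e (Suc j)) = e"
  by auto

lemma map_econs: "map (econs x e) [0..<Suc k] = x # map e [0..<k]"
  by (induct k) auto

definition rfn :: "nat \<Rightarrow> ((nat \<Rightarrow> nat) \<Rightarrow> nat) \<Rightarrow> bool" where
  "rfn k g \<longleftrightarrow> (\<exists>f. \<forall>e. eval_recf f (map e [0..<k]) (g e))"

definition rpred :: "nat \<Rightarrow> ((nat \<Rightarrow> nat) \<Rightarrow> bool) \<Rightarrow> bool" where
  "rpred k P \<longleftrightarrow> rfn k (\<lambda>e. if P e then 1 else 0)"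

lemma rfn_proj: "i < k \<Longrightarrow> rfn k (\<lambda>e. e i)"
  unfolding rfn_def
  by (rule exI[of _ "Proj i"]) (metis eval_recf.proj length_map length_upt minus_nat.diff_0 nth_map_upt add_0)

lemma rfn_zero: "rfn k (\<lambda>e. 0)"
  unfolding rfn_def by (auto intro: eval_recf.zero)

lemma rfn_comp:
  assumes g: "rfn j g" and h: "\<forall>i<j. rfn k (h i)"
  shows "rfn k (\<lambda>e. g (\<lambda>i. h i e))"
proof -
  obtain gf where gf: "\<And>e. eval_recf gf (map e [0..<j]) (g e)" using g unfolding rfn_def by blast
  have "\<forall>i<j. \<exists>f. \<forall>e. eval_recf f (map e [0..<k]) (h i e)" using h unfolding rfn_def by blast
  then obtain F where F: "\<And>i e. i < j \<Longrightarrow> eval_recf (F i) (map e [0..<k]) (h i e)" by metis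
  show ?thesis unfolding rfn_def
  proof (intro exI allI)
    fix e
    show "eval_recf (Comp gf (map F [0..<j])) (map e [0..<k]) (g (\<lambda>i. h i e))"
    proof (rule eval_recf.comp[where ys = "map (\<lambda>i. h i e) [0..<j]"])
      show "eval_recf gf (map (\<lambda>i. h i e) [0..<j]) (g (\<lambda>i. h i e))" using gf[of "\<lambda>i. h i e"] .
    qed (auto intro: F)
  qed
qed

lemma rfn_succ: "rfn k f \<Longrightarrow> rfn k (\<lambda>e. Suc (f e))"
proof -
  assume f: "rfn k f"
  have "rfn 1 (\<lambda>e. Suc (e 0))"
    unfolding rfn_def by (rule exI[of _ Succ]) (auto intro: eval_recf.succ)
  from rfn_comp[OF this, of k "\<lambda>_. f"] f show ?thesis by simp
qed

lemma rfn_const: "rfn k (\<lambda>e. c)"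
  by (induct c) (auto intro: rfn_zero rfn_succ[of k "\<lambda>_. _", simplified])

lemma rfn_cong: "rfn k f \<Longrightarrow> (\<And>e. f e = g e) \<Longrightarrow> rfn k g"
proof -
  assume "rfn k f" "\<And>e. f e = g e"
  then have "f = g" by auto
  with \<open>rfn k f\<close> show ?thesis by simp
qed

fun primr :: "((nat \<Rightarrow> nat) \<Rightarrow> nat) \<Rightarrow> ((nat \<Rightarrow> nat) \<Rightarrow> nat) \<Rightarrow> nat \<Rightarrow> (nat \<Rightarrow> nat) \<Rightarrow> nat" where
  "primr b s 0 e = b e"
| "primr b s (Suc n) e = s (econs n (econs (primr b s n e) e))"

lemma rfn_prim0:
  assumes b: "rfn k b" and s: "rfn (Suc (Suc k)) s"
  shows "rfn (Suc k) (\<lambda>e. primr b s (e 0) (\<lambda>i. e (Suc i)))"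
proof -
  obtain bf where bf: "\<And>e. eval_recf bf (map e [0..<k]) (b e)" using b unfolding rfn_def by blast
  obtain sf where sf: "\<And>e. eval_recf sf (map e [0..<Suc (Suc k)]) (s e)" using s unfolding rfn_def by blast
  have *: "eval_recf (PrimRec bf sf) (n # map e [0..<k]) (primr b s n e)" for n e
  proof (induct n)
    case 0
    then show ?case using bf by (auto intro: eval_recf.pr0)
  next
    case (Suc n)
    have "eval_recf sf (n # primr b s n e # map e [0..<k]) (primr b s (Suc n) e)"
      using sf[of "econs n (econs (primr b s n e) e)"] by (simp del: upt_Suc add: map_econs)
    then show ?case using Suc by (auto intro: eval_recf.prS)
  qed
  show ?thesis unfolding rfn_def
  proof (intro exI allI)
    fix e :: "nat \<Rightarrow> nat"
    have "map e [0..<Suc k] = e 0 # map (\<lambda>i. e (Suc i)) [0..<k]"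
    proof -
      have "econs (e 0) (\<lambda>i. e (Suc i)) = e" by (auto simp: econs_def split: nat.split)
      then show ?thesis using map_econs[of "e 0" "\<lambda>i. e (Suc i)" k] by simp
    qed
    then show "eval_recf (PrimRec bf sf) (map e [0..<Suc k]) (primr b s (e 0) (\<lambda>i. e (Suc i)))"
      using * by simp
  qed
qed

lemma rfn_prim:
  assumes b: "rfn k b" and s: "rfn (Suc (Suc k)) s" and n: "rfn k n"
  shows "rfn k (\<lambda>e. primr b s (n e) e)"
proof -
  have h: "\<forall>i<Suc k. rfn k (\<lambda>e. econs (n e) e i)"
  proof (intro allI impI)
    fix i assume "i < Suc k"
    then show "rfn k (\<lambda>e. econs (n e) e i)"
    proof (cases i)
      case 0 then show ?thesis using n by simp
    next
      case (Suc j) then show ?thesis using \<open>i < Suc k\<close> by (simp add: rfn_proj)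
    qed
  qed
  have "rfn k (\<lambda>e. primr b s (econs (n e) e 0) (\<lambda>i. econs (n e) e (Suc i)))"
    using rfn_comp[OF rfn_prim0[OF b s] h] by simp
  then show ?thesis by simp
qed


lemma rfn_shift: "rfn k g \<Longrightarrow> rfn (k + j) (\<lambda>e. g (\<lambda>i. e (i + j)))"
  by (rule rfn_comp[of k g "k + j" "\<lambda>i e. e (i + j)", simplified]) (auto intro: rfn_proj)

lemma rfn_shift2: "rfn k g \<Longrightarrow> rfn (Suc (Suc k)) (\<lambda>e. g (\<lambda>i. e (Suc (Suc i))))"
  using rfn_shift[of k g 2] by simp

lemma rfn_keep0: "rfn (Suc k) g \<Longrightarrow> rfn (Suc (Suc k)) (\<lambda>e. g (econs (e 0) (\<lambda>i. e (Suc (Suc i)))))"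
proof -
  assume g: "rfn (Suc k) g"
  have h: "\<forall>i<Suc k. rfn (Suc (Suc k)) (\<lambda>e. econs (e 0) (\<lambda>i. e (Suc (Suc i))) i)"
  proof (intro allI impI)
    fix i assume i: "i < Suc k"
    show "rfn (Suc (Suc k)) (\<lambda>e. econs (e 0) (\<lambda>i. e (Suc (Suc i))) i)"
    proof (cases i)
      case 0
      have "rfn (Suc (Suc k)) (\<lambda>e. e 0)" by (rule rfn_proj) simp
      then show ?thesis using 0 by simp
    next
      case (Suc j)
      have "rfn (Suc (Suc k)) (\<lambda>e. e (Suc (Suc j)))" by (rule rfn_proj) (use i Suc in simp)
      then show ?thesis using Suc by simp
    qed
  qed
  show ?thesis using rfn_comp[OF g h] .
qed

lemma primr_add: "primr b (\<lambda>e. Suc (e (Suc 0))) n e = n + b e"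
  by (induct n) auto

lemma rfn_add: "rfn k f \<Longrightarrow> rfn k g \<Longrightarrow> rfn k (\<lambda>e. f e + g e)"
proof -
  assume f: "rfn k f" and g: "rfn k g"
  have "rfn k (\<lambda>e. primr g (\<lambda>e. Suc (e (Suc 0))) (f e) e)"
    by (rule rfn_prim[OF g _ f]) (auto intro: rfn_succ rfn_proj)
  then show ?thesis by (simp add: primr_add)
qed

lemma primr_mult: "primr (\<lambda>e. 0) (\<lambda>e'. e' (Suc 0) + g (\<lambda>i. e' (Suc (Suc i)))) n e = n * g e"
  by (induct n) (auto simp: econs_def)

lemma rfn_mult: "rfn k f \<Longrightarrow> rfn k g \<Longrightarrow> rfn k (\<lambda>e. f e * g e)"
proof -
  assume f: "rfn k f" and g: "rfn k g"
  have "rfn k (\<lambda>e. primr (\<lambda>e. 0) (\<lambda>e'. e' (Suc 0) + g (\<lambda>i. e' (Suc (Suc i)))) (f e) e)"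
    by (rule rfn_prim[OF rfn_const _ f]) (auto intro!: rfn_add rfn_proj rfn_shift2 g)
  then show ?thesis by (simp add: primr_mult)
qed

lemma primr_pred: "primr (\<lambda>e. 0) (\<lambda>e'. e' 0) n e = n - 1"
  by (induct n) auto

lemma rfn_pred: "rfn k f \<Longrightarrow> rfn k (\<lambda>e. f e - 1)"
proof -
  assume f: "rfn k f"
  have "rfn k (\<lambda>e. primr (\<lambda>e. 0) (\<lambda>e'. e' 0) (f e) e)"
    by (rule rfn_prim[OF rfn_const _ f]) (auto intro!: rfn_proj)
  then show ?thesis by (simp add: primr_pred)
qed

lemma primr_sub: "primr g (\<lambda>e'. e' (Suc 0) - Suc 0) n e = g e - n"
  by (induct n) auto

lemma rfn_sub: "rfn k f \<Longrightarrow> rfn k g \<Longrightarrow> rfn k (\<lambda>e. f e - g e)"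
proof -
  assume f: "rfn k f" and g: "rfn k g"
  have "rfn k (\<lambda>e. primr f (\<lambda>e'. e' (Suc 0) - Suc 0) (g e) e)"
    by (rule rfn_prim[OF f _ g], rule rfn_cong[OF rfn_pred[OF rfn_proj[of "Suc 0"]]], auto)
  then show ?thesis by (simp add: primr_sub)
qed

lemma primr_cond: "primr f (\<lambda>e'. g (\<lambda>i. e' (Suc (Suc i)))) n e = (if n = 0 then f e else g e)"
  by (cases n) (auto simp: econs_def)

lemma rfn_cond: "rfn k c \<Longrightarrow> rfn k f \<Longrightarrow> rfn k g \<Longrightarrow> rfn k (\<lambda>e. if c e = 0 then f e else g e)"
proof -
  assume c: "rfn k c" and f: "rfn k f" and g: "rfn k g"
  have "rfn k (\<lambda>e. primr f (\<lambda>e'. g (\<lambda>i. e' (Suc (Suc i)))) (c e) e)"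
    by (rule rfn_prim[OF f _ c]) (auto intro!: rfn_shift2 g)
  then show ?thesis by (simp add: primr_cond)
qed

lemma rpred_if: "rpred k P \<Longrightarrow> rfn k f \<Longrightarrow> rfn k g \<Longrightarrow> rfn k (\<lambda>e. if P e then f e else g e)"
proof -
  assume P: "rpred k P" and f: "rfn k f" and g: "rfn k g"
  have "rfn k (\<lambda>e. if (if P e then 1 else 0::nat) = 0 then g e else f e)"
    using P unfolding rpred_def by (rule rfn_cond[OF _ g f])
  then show ?thesis by (rule rfn_cong) auto
qed

lemma rpred_const: "rpred k (\<lambda>e. b)"
  unfolding rpred_def by (rule rfn_const)

lemma rpred_eq: "rfn k f \<Longrightarrow> rfn k g \<Longrightarrow> rpred k (\<lambda>e. f e = g e)"
  unfolding rpred_def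
  by (rule rfn_cong[OF rfn_cond[of k "\<lambda>e. (f e - g e) + (g e - f e)" "\<lambda>e. 1" "\<lambda>e. 0"]])
     (auto intro!: rfn_add rfn_sub rfn_const)

lemma rpred_le: "rfn k f \<Longrightarrow> rfn k g \<Longrightarrow> rpred k (\<lambda>e. f e \<le> g e)"
  unfolding rpred_def
  by (rule rfn_cong[OF rfn_cond[of k "\<lambda>e. f e - g e" "\<lambda>e. 1" "\<lambda>e. 0"]])
     (auto intro!: rfn_add rfn_sub rfn_const)

lemma rpred_less: "rfn k f \<Longrightarrow> rfn k g \<Longrightarrow> rpred k (\<lambda>e. f e < g e)"
  unfolding rpred_def
  by (rule rfn_cong[OF rfn_cond[of k "\<lambda>e. g e - f e" "\<lambda>e. 0" "\<lambda>e. 1"]])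
     (auto intro!: rfn_add rfn_sub rfn_const)

lemma rpred_not: "rpred k P \<Longrightarrow> rpred k (\<lambda>e. \<not> P e)"
proof -
  assume P: "rpred k P"
  have "rfn k (\<lambda>e. if P e then 0 else 1)" by (rule rpred_if[OF P rfn_const rfn_const])
  then show ?thesis unfolding rpred_def by (rule rfn_cong) auto
qed

lemma rpred_and: "rpred k P \<Longrightarrow> rpred k Q \<Longrightarrow> rpred k (\<lambda>e. P e \<and> Q e)"
proof -
  assume P: "rpred k P" and Q: "rpred k Q"
  have "rfn k (\<lambda>e. if P e then (if Q e then 1 else 0) else 0)"
    using Q unfolding rpred_def by (rule rpred_if[OF P _ rfn_const])
  then show ?thesis unfolding rpred_def by (rule rfn_cong) auto
qed

lemma rpred_or: "rpred k P \<Longrightarrow> rpred k Q \<Longrightarrow> rpred k (\<lambda>e. P e \<or> Q e)"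
proof -
  assume P: "rpred k P" and Q: "rpred k Q"
  have "rfn k (\<lambda>e. if P e then 1 else (if Q e then 1 else 0))"
    using Q unfolding rpred_def by (rule rpred_if[OF P rfn_const])
  then show ?thesis unfolding rpred_def by (rule rfn_cong) auto
qed

lemma rpred_imp: "rpred k P \<Longrightarrow> rpred k Q \<Longrightarrow> rpred k (\<lambda>e. P e \<longrightarrow> Q e)"
proof -
  assume P: "rpred k P" and Q: "rpred k Q"
  have "rfn k (\<lambda>e. if P e then (if Q e then 1 else 0) else 1)"
    using Q unfolding rpred_def by (rule rpred_if[OF P _ rfn_const])
  then show ?thesis unfolding rpred_def by (rule rfn_cong) auto
qed

lemma rpred_iff: "rpred k P \<Longrightarrow> rpred k Q \<Longrightarrow> rpred k (\<lambda>e. P e \<longleftrightarrow> Q e)"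
proof -
  assume P: "rpred k P" and Q: "rpred k Q"
  have nQ: "rpred k (\<lambda>e. \<not> Q e)" using Q by (rule rpred_not)
  have "rfn k (\<lambda>e. if P e then (if Q e then 1 else 0) else (if \<not> Q e then 1 else 0))"
    using Q nQ unfolding rpred_def by (rule rpred_if[OF P])
  then show ?thesis unfolding rpred_def by (rule rfn_cong) auto
qed

lemma primr_sum: "primr (\<lambda>e. 0) (\<lambda>e'. e' (Suc 0) + f (econs (e' 0) (\<lambda>i. e' (Suc (Suc i))))) n e = (\<Sum>i<n. f (econs i e))"
  by (induct n) (auto simp: econs_def)

lemma rfn_sum: "rfn (Suc k) f \<Longrightarrow> rfn k b \<Longrightarrow> rfn k (\<lambda>e. \<Sum>i<b e. f (econs i e))"
proof -
  assume f: "rfn (Suc k) f" and b: "rfn k b"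
  have "rfn k (\<lambda>e. primr (\<lambda>e. 0) (\<lambda>e'. e' (Suc 0) + f (econs (e' 0) (\<lambda>i. e' (Suc (Suc i))))) (b e) e)"
    by (rule rfn_prim[OF rfn_const _ b]) (auto intro!: rfn_add rfn_proj rfn_keep0 f)
  then show ?thesis by (simp add: primr_sum)
qed

lemma rpred_all: "rpred (Suc k) (\<lambda>e. P (e 0) (\<lambda>i. e (Suc i))) \<Longrightarrow> rfn k b \<Longrightarrow> rpred k (\<lambda>e. \<forall>i. i < b e \<longrightarrow> P i e)"
proof -
  assume P: "rpred (Suc k) (\<lambda>e. P (e 0) (\<lambda>i. e (Suc i)))" and b: "rfn k b"
  have "rfn (Suc k) (\<lambda>e. if P (e 0) (\<lambda>i. e (Suc i)) then 0 else 1)"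
    by (rule rpred_if[OF P rfn_const rfn_const])
  then have "rfn k (\<lambda>e. \<Sum>i<b e. (\<lambda>e. if P (e 0) (\<lambda>i. e (Suc i)) then 0 else 1) (econs i e))"
    using b by (rule rfn_sum)
  then have "rfn k (\<lambda>e. \<Sum>i<b e. (if P i e then 0 else 1::nat))"
    by (simp add: econs_eta)
  then have "rpred k (\<lambda>e. (\<Sum>i<b e. (if P i e then 0 else 1::nat)) = 0)"
    by (intro rpred_eq rfn_const)
  then show ?thesis unfolding rpred_def by (rule rfn_cong) auto
qed

lemma rpred_ex: "rpred (Suc k) (\<lambda>e. P (e 0) (\<lambda>i. e (Suc i))) \<Longrightarrow> rfn k b \<Longrightarrow> rpred k (\<lambda>e. \<exists>i. i < b e \<and> P i e)"
proof -
  assume P: "rpred (Suc k) (\<lambda>e. P (e 0) (\<lambda>i. e (Suc i)))" and b: "rfn k b"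
  have "rpred (Suc k) (\<lambda>e. \<not> P (e 0) (\<lambda>i. e (Suc i)))" using P by (rule rpred_not)
  then have "rpred k (\<lambda>e. \<forall>i. i < b e \<longrightarrow> \<not> P i e)" using b by (rule rpred_all)
  then have "rpred k (\<lambda>e. \<not> (\<forall>i. i < b e \<longrightarrow> \<not> P i e))" by (rule rpred_not)
  then show ?thesis unfolding rpred_def by (rule rfn_cong) auto
qed


lemma primr_pow: "primr (\<lambda>e. Suc 0) (\<lambda>e'. e' (Suc 0) * g (\<lambda>i. e' (Suc (Suc i)))) n e = g e ^ n"
  by (induct n) (auto simp: econs_def)

lemma rfn_pow: "rfn k f \<Longrightarrow> rfn k g \<Longrightarrow> rfn k (\<lambda>e. f e ^ g e)"
proof -
  assume f: "rfn k f" and g: "rfn k g"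
  have "rfn k (\<lambda>e. primr (\<lambda>e. Suc 0) (\<lambda>e'. e' (Suc 0) * f (\<lambda>i. e' (Suc (Suc i)))) (g e) e)"
    by (rule rfn_prim[OF rfn_const _ g]) (auto intro!: rfn_mult rfn_proj rfn_shift2 f)
  then show ?thesis by (simp add: primr_pow)
qed

lemma rfn_sum': "rfn (Suc k) (\<lambda>e. f (e 0) (\<lambda>i. e (Suc i))) \<Longrightarrow> rfn k b \<Longrightarrow> rfn k (\<lambda>e. \<Sum>i<b e. f i e)"
  using rfn_sum[of k "\<lambda>e. f (e 0) (\<lambda>i. e (Suc i))" b] by (simp add: econs_eta)

lemma div_as_sum: "(x::nat) div y = (if y = 0 then 0 else \<Sum>q<x. if Suc q * y \<le> x then 1 else 0)"
proof (cases "y = 0")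
  case False
  have "(\<Sum>q<x. if Suc q * y \<le> x then 1 else 0::nat) = card {q. q < x \<and> Suc q * y \<le> x}"
    by (simp add: sum.If_cases Int_def)
  also have "{q. q < x \<and> Suc q * y \<le> x} = {q. q < x div y}"
  proof -
    have A: "Suc q * y \<le> x \<longleftrightarrow> q < x div y" for q
    proof -
      have "Suc q \<le> x div y \<longleftrightarrow> Suc q * y \<le> x" using False by (simp add: less_eq_div_iff_mult_less_eq)
      then show ?thesis by linarith
    qed
    have B: "x div y \<le> x" by simp
    have "q < x \<and> Suc q * y \<le> x \<longleftrightarrow> q < x div y" for q using A[of q] B by linarith
    then show ?thesis by (rule Collect_cong)
  qed
  finally show ?thesis using False by simp
qed simp

lemma rfn_div: "rfn k f \<Longrightarrow> rfn k g \<Longrightarrow> rfn k (\<lambda>e. f e div g e)"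
proof -
  assume f: "rfn k f" and g: "rfn k g"
  have "rfn k (\<lambda>e. if g e = 0 then 0 else \<Sum>q<f e. if Suc q * g e \<le> f e then 1 else 0)"
    apply (rule rfn_cond[OF g rfn_const])
    apply (rule rfn_sum'[OF _ f])
    apply (rule rpred_if[OF rpred_le rfn_const rfn_const])
     apply (rule rfn_mult[OF rfn_succ[OF rfn_proj]], simp)
     apply (rule rfn_shift[of k g 1, simplified], rule g)
    apply (rule rfn_shift[of k f 1, simplified], rule f)
    done
  then show ?thesis by (simp add: div_as_sum[symmetric])
qed

lemma rfn_mod: "rfn k f \<Longrightarrow> rfn k g \<Longrightarrow> rfn k (\<lambda>e. f e mod g e)"
proof -
  assume f: "rfn k f" and g: "rfn k g"
  have "rfn k (\<lambda>e. f e - g e * (f e div g e))"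
    by (intro rfn_sub rfn_mult rfn_div f g)
  then show ?thesis by (simp add: minus_mult_div_eq_mod)
qed

named_theorems rfn_intros
declare rfn_proj[rfn_intros] rfn_const[rfn_intros] rfn_succ[rfn_intros] rfn_add[rfn_intros]
  rfn_mult[rfn_intros] rfn_sub[rfn_intros] rfn_pow[rfn_intros] rfn_div[rfn_intros] rfn_mod[rfn_intros]
  rpred_if[rfn_intros] rpred_const[rfn_intros] rpred_eq[rfn_intros] rpred_le[rfn_intros]
  rpred_less[rfn_intros] rpred_not[rfn_intros] rpred_and[rfn_intros] rpred_or[rfn_intros]
  rpred_imp[rfn_intros] rpred_iff[rfn_intros] rpred_all[rfn_intros] rpred_ex[rfn_intros]
  rfn_sum'[rfn_intros]


lemma rfn_comp1: "rfn 1 (\<lambda>e. h (e 0)) \<Longrightarrow> rfn k a \<Longrightarrow> rfn k (\<lambda>e. h (a e))"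
  using rfn_comp[of 1 "\<lambda>e. h (e 0)" k "\<lambda>i. a"] by simp

lemma rfn_comp2: "rfn 2 (\<lambda>e. h (e 0) (e 1)) \<Longrightarrow> rfn k a \<Longrightarrow> rfn k b \<Longrightarrow> rfn k (\<lambda>e. h (a e) (b e))"
  using rfn_comp[of 2 "\<lambda>e. h (e 0) (e 1)" k "\<lambda>i. if i = 0 then a else b"] by (simp add: less_2_cases_iff)

lemma rfn_comp3: "rfn 3 (\<lambda>e. h (e 0) (e 1) (e 2)) \<Longrightarrow> rfn k a \<Longrightarrow> rfn k b \<Longrightarrow> rfn k c \<Longrightarrow> rfn k (\<lambda>e. h (a e) (b e) (c e))"
proof -
  assume h: "rfn 3 (\<lambda>e. h (e 0) (e 1) (e 2))" and a: "rfn k a" and b: "rfn k b" and c: "rfn k c"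
  have "\<forall>i<3. rfn k ((\<lambda>i. if i = 0 then a else if i = 1 then b else c) i)"
    using a b c by (auto simp: numeral_3_eq_3 less_Suc_eq)
  from rfn_comp[OF h this] show ?thesis by simp
qed

lemma rpred_comp1: "rpred 1 (\<lambda>e. h (e 0)) \<Longrightarrow> rfn k a \<Longrightarrow> rpred k (\<lambda>e. h (a e))"
  unfolding rpred_def by (rule rfn_comp1[of "\<lambda>x. if h x then 1 else 0"])

lemma rpred_comp2: "rpred 2 (\<lambda>e. h (e 0) (e 1)) \<Longrightarrow> rfn k a \<Longrightarrow> rfn k b \<Longrightarrow> rpred k (\<lambda>e. h (a e) (b e))"
  unfolding rpred_def by (rule rfn_comp2[of "\<lambda>x y. if h x y then 1 else 0"])

lemma rpred_comp3: "rpred 3 (\<lambda>e. h (e 0) (e 1) (e 2)) \<Longrightarrow> rfn k a \<Longrightarrow> rfn k b \<Longrightarrow> rfn k c \<Longrightarrow> rpred k (\<lambda>e. h (a e) (b e) (c e))"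
  unfolding rpred_def by (rule rfn_comp3[of "\<lambda>x y z. if h x y z then 1 else 0"])

lemma primr_iter: "primr a (\<lambda>e'. h (e' (Suc 0))) n e = (h ^^ n) (a e)"
  by (induct n) auto

lemma rfn_iter: "rfn 1 (\<lambda>e. h (e 0)) \<Longrightarrow> rfn k a \<Longrightarrow> rfn k n \<Longrightarrow> rfn k (\<lambda>e. (h ^^ n e) (a e))"
proof -
  assume h: "rfn 1 (\<lambda>e. h (e 0))" and a: "rfn k a" and n: "rfn k n"
  have "rfn (Suc (Suc k)) (\<lambda>e'. h (e' (Suc 0)))"
    by (rule rfn_comp1[OF h rfn_proj]) simp
  then have "rfn k (\<lambda>e. primr a (\<lambda>e'. h (e' (Suc 0))) (n e) e)"
    by (rule rfn_prim[OF a _ n])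
  then show ?thesis by (simp add: primr_iter)
qed

section \<open>Decoding pairs and lists\<close>

definition pfst :: "nat \<Rightarrow> nat" where
  "pfst x = (\<Sum>a<Suc x. \<Sum>b<Suc x. if triangle (a + b) + a = x then a else 0)"

definition psnd :: "nat \<Rightarrow> nat" where
  "psnd x = (\<Sum>a<Suc x. \<Sum>b<Suc x. if triangle (a + b) + a = x then b else 0)"

lemma rfn_triangle: "rfn k a \<Longrightarrow> rfn k (\<lambda>e. triangle (a e))"
  unfolding triangle_def by (intro rfn_intros; simp)

lemma rfn_pfst: "rfn k a \<Longrightarrow> rfn k (\<lambda>e. pfst (a e))"
  by (rule rfn_comp1[of pfst], unfold pfst_def) (intro rfn_intros rfn_triangle; simp)

lemma rfn_psnd: "rfn k a \<Longrightarrow> rfn k (\<lambda>e. psnd (a e))"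
  by (rule rfn_comp1[of psnd], unfold psnd_def) (intro rfn_intros rfn_triangle; simp)

lemma pe_iff: "triangle (a + b) + a = x \<longleftrightarrow> (a, b) = prod_decode x"
proof -
  have "triangle (a + b) + a = prod_encode (a, b)" by (simp add: prod_encode_def)
  then show ?thesis by (metis prod_decode_inverse prod_encode_inverse)
qed

lemma pdec_le: "fst (prod_decode x) \<le> x" "snd (prod_decode x) \<le> x"
  by (metis le_prod_encode_1 prod.collapse prod_decode_inverse)
     (metis le_prod_encode_2 prod.collapse prod_decode_inverse)

lemma pfst_correct: "pfst x = fst (prod_decode x)"
proof -
  obtain a0 b0 where ab: "prod_decode x = (a0, b0)" by (cases "prod_decode x")
  have le: "a0 < Suc x" "b0 < Suc x" using pdec_le[of x] ab by auto
  have "pfst x = (\<Sum>a<Suc x. if a = a0 then (\<Sum>b<Suc x. if b = b0 then a else 0) else 0)"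
    unfolding pfst_def pe_iff ab by (intro sum.cong) auto
  also have "\<dots> = a0" using le by simp
  finally show ?thesis using ab by simp
qed

lemma psnd_correct: "psnd x = snd (prod_decode x)"
proof -
  obtain a0 b0 where ab: "prod_decode x = (a0, b0)" by (cases "prod_decode x")
  have le: "a0 < Suc x" "b0 < Suc x" using pdec_le[of x] ab by auto
  have "psnd x = (\<Sum>a<Suc x. if a = a0 then (\<Sum>b<Suc x. if b = b0 then b else 0) else 0)"
    unfolding psnd_def pe_iff ab by (intro sum.cong) auto
  also have "\<dots> = b0" using le by (simp add: sum.delta)
  finally show ?thesis using ab by simp
qed

lemma pfst_pe [simp]: "pfst (prod_encode (a, b)) = a" and psnd_pe [simp]: "psnd (prod_encode (a, b)) = b"
  by (simp_all add: pfst_correct psnd_correct)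

definition lhd :: "nat \<Rightarrow> nat" where "lhd c = pfst (c - 1)"
definition ltl :: "nat \<Rightarrow> nat" where "ltl c = psnd (c - 1)"
definition lnth :: "nat \<Rightarrow> nat \<Rightarrow> nat" where "lnth c i = lhd ((ltl ^^ i) c)"
definition lmem :: "nat \<Rightarrow> nat \<Rightarrow> bool" where
  "lmem c q \<longleftrightarrow> (\<exists>i<c. (ltl ^^ i) c \<noteq> 0 \<and> lhd ((ltl ^^ i) c) = q)"

lemma rfn_lhd: "rfn k a \<Longrightarrow> rfn k (\<lambda>e. lhd (a e))"
  unfolding lhd_def by (intro rfn_intros rfn_pfst)

lemma rfn_ltl1: "rfn 1 (\<lambda>e. ltl (e 0))"
  unfolding ltl_def by (intro rfn_intros rfn_psnd; simp)

lemma rfn_lnth: "rfn k a \<Longrightarrow> rfn k b \<Longrightarrow> rfn k (\<lambda>e. lnth (a e) (b e))"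
  unfolding lnth_def by (intro rfn_lhd rfn_iter[OF rfn_ltl1])

lemma rpred_lmem: "rfn k a \<Longrightarrow> rfn k b \<Longrightarrow> rpred k (\<lambda>e. lmem (a e) (b e))"
  apply (rule rpred_comp2[of lmem], unfold lmem_def)
  apply (intro rfn_intros rfn_lhd rfn_iter[OF rfn_ltl1]; simp)
  apply assumption+
  done

lemma ltl_enc: "ltl (list_encode xs) = list_encode (tl xs)"
proof (cases xs)
  case Nil
  have "prod_encode (0, 0) = 0" by (simp add: prod_encode_def)
  then have "psnd 0 = 0" using psnd_pe[of 0 0] by simp
  then show ?thesis using Nil by (simp add: ltl_def)
qed (simp add: ltl_def)

lemma lhd_enc: "lhd (list_encode (x # xs)) = x"
  by (simp add: lhd_def)

lemma ltl_iter_enc: "(ltl ^^ i) (list_encode xs) = list_encode (drop i xs)"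
  by (induct i) (auto simp: ltl_enc drop_Suc tl_drop)

lemma lnth_enc: "i < length xs \<Longrightarrow> lnth (list_encode xs) i = xs ! i"
  by (simp add: lnth_def ltl_iter_enc Cons_nth_drop_Suc[symmetric] lhd_def)

lemma length_le_enc: "length xs \<le> list_encode xs"
proof (induct xs)
  case (Cons x xs)
  then show ?case using le_prod_encode_2[of "list_encode xs" x] by simp
qed simp

lemma list_encode_0_iff: "list_encode xs = 0 \<longleftrightarrow> xs = []"
  by (cases xs) auto

lemma lmem_enc: "lmem (list_encode xs) q \<longleftrightarrow> q \<in> set xs"
proof -
  have "lmem (list_encode xs) q \<longleftrightarrow> (\<exists>i<list_encode xs. i < length xs \<and> xs ! i = q)"
    unfolding lmem_def ltl_iter_enc list_encode_0_iff
    by (intro ex_cong1) (metis Cons_nth_drop_Suc drop_eq_Nil2 lhd_enc not_le)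
  also have "\<dots> \<longleftrightarrow> (\<exists>i<length xs. xs ! i = q)" 
  proof
    assume "\<exists>i<list_encode xs. i < length xs \<and> xs ! i = q" then show "\<exists>i<length xs. xs ! i = q" by blast
  next
    assume "\<exists>i<length xs. xs ! i = q"
    then obtain i where "i < length xs" "xs ! i = q" by blast
    moreover have "i < list_encode xs" using length_le_enc[of xs] \<open>i < length xs\<close> by linarith
    ultimately show "\<exists>i<list_encode xs. i < length xs \<and> xs ! i = q" by blast
  qed
  finally show ?thesis by (simp add: in_set_conv_nth)
qed



section \<open>Segment characteristics and profiles\<close>

datatype chr = Chr (cF: bool) (cN: bool) (cL: bool) (cH: bool)

definition chor :: "chr \<Rightarrow> chr \<Rightarrow> chr" where
  "chor a b = Chr (cF a \<or> cF b) (cN a \<or> cN b) (cL a \<or> cL b) (cH a \<or> cH b)"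

lemma chr_UNIV: "(UNIV :: chr set) = (\<lambda>(a, b, c, d). Chr a b c d) ` UNIV"
proof -
  have "x \<in> (\<lambda>(a, b, c, d). Chr a b c d) ` UNIV" for x
    by (cases x) (auto intro: image_eqI[where x = "(_, _, _, _)"])
  then show ?thesis by auto
qed

lemma finite_chr: "finite (UNIV :: chr set)"
  by (simp add: chr_UNIV)

definition isLo :: "ereal \<Rightarrow> qbar \<Rightarrow> bool" where
  "isLo c x \<longleftrightarrow> x \<noteq> MInf \<and> x \<noteq> PInf \<and> to_ereal x < c"

definition isHi :: "ereal \<Rightarrow> qbar \<Rightarrow> bool" where
  "isHi c x \<longleftrightarrow> x \<noteq> MInf \<and> x \<noteq> PInf \<and> c \<le> to_ereal x"

definition segchr :: "wba \<Rightarrow> ereal \<Rightarrow> (nat \<Rightarrow> nat) \<Rightarrow> (nat \<Rightarrow> nat) \<Rightarrow> nat \<Rightarrow> chr" where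
  "segchr N c x r l = Chr (\<exists>k. 0 < k \<and> k \<le> l \<and> r k \<in> fin N)
      (\<exists>k<l. wt N (r k) (x k) (r (Suc k)) = MInf)
      (\<exists>k<l. isLo c (wt N (r k) (x k) (r (Suc k))))
      (\<exists>k<l. isHi c (wt N (r k) (x k) (r (Suc k))))"

definition hs :: "wba \<Rightarrow> ereal \<Rightarrow> (nat \<Rightarrow> nat) \<Rightarrow> nat \<Rightarrow> nat \<Rightarrow> nat \<Rightarrow> chr \<Rightarrow> bool" where
  "hs N c x l p q ch \<longleftrightarrow> (\<exists>r. (\<forall>k\<le>l. r k < nstates N) \<and> r 0 = p \<and> r l = q \<and> segchr N c x r l = ch)"

definition pcomp :: "(nat \<Rightarrow> nat \<Rightarrow> chr \<Rightarrow> bool) \<Rightarrow> (nat \<Rightarrow> nat \<Rightarrow> chr \<Rightarrow> bool) \<Rightarrow> nat \<Rightarrow> nat \<Rightarrow> chr \<Rightarrow> bool" where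
  "pcomp P1 P2 = (\<lambda>p q ch. \<exists>q' a b. P1 p q' a \<and> P2 q' q b \<and> ch = chor a b)"

lemma ex_less_add: "(\<exists>k<(l1::nat) + l2. P k) \<longleftrightarrow> (\<exists>k<l1. P k) \<or> (\<exists>k<l2. P (l1 + k))"
proof
  assume "\<exists>k<l1 + l2. P k"
  then obtain k where "k < l1 + l2" "P k" by blast
  show "(\<exists>k<l1. P k) \<or> (\<exists>k<l2. P (l1 + k))"
  proof (cases "k < l1")
    case True then show ?thesis using \<open>P k\<close> by blast
  next
    case False
    then have "k - l1 < l2" "l1 + (k - l1) = k" using \<open>k < l1 + l2\<close> by linarith+
    then show ?thesis using \<open>P k\<close> by metis
  qed
next
  assume "(\<exists>k<l1. P k) \<or> (\<exists>k<l2. P (l1 + k))"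
  then show "\<exists>k<l1 + l2. P k"
  proof (elim disjE exE conjE)
    fix k assume "k < l1" "P k" then show ?thesis by (intro exI[of _ k]) simp
  next
    fix k assume "k < l2" "P (l1 + k)" then show ?thesis by (intro exI[of _ "l1 + k"]) simp
  qed
qed

lemma ex_le_add: "(\<exists>k. 0 < k \<and> k \<le> (l1::nat) + l2 \<and> P k) \<longleftrightarrow> (\<exists>k. 0 < k \<and> k \<le> l1 \<and> P k) \<or> (\<exists>k. 0 < k \<and> k \<le> l2 \<and> P (l1 + k))"
proof
  assume "\<exists>k. 0 < k \<and> k \<le> l1 + l2 \<and> P k"
  then obtain k where "0 < k" "k \<le> l1 + l2" "P k" by blast
  show "(\<exists>k. 0 < k \<and> k \<le> l1 \<and> P k) \<or> (\<exists>k. 0 < k \<and> k \<le> l2 \<and> P (l1 + k))"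
  proof (cases "k \<le> l1")
    case True then show ?thesis using \<open>P k\<close> \<open>0 < k\<close> by blast
  next
    case False
    then have "0 < k - l1" "k - l1 \<le> l2" "l1 + (k - l1) = k" using \<open>k \<le> l1 + l2\<close> by linarith+
    then show ?thesis using \<open>P k\<close> by metis
  qed
next
  assume "(\<exists>k. 0 < k \<and> k \<le> l1 \<and> P k) \<or> (\<exists>k. 0 < k \<and> k \<le> l2 \<and> P (l1 + k))"
  then show "\<exists>k. 0 < k \<and> k \<le> l1 + l2 \<and> P k"
  proof (elim disjE exE conjE)
    fix k assume "0 < k" "k \<le> l1" "P k" then show ?thesis by (intro exI[of _ k]) simp
  next
    fix k assume "0 < k" "k \<le> l2" "P (l1 + k)" then show ?thesis by (intro exI[of _ "l1 + k"]) simp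
  qed
qed

lemma segchr_split:
  "segchr N c x r (l1 + l2) = chor (segchr N c x r l1) (segchr N c (\<lambda>k. x (l1 + k)) (\<lambda>k. r (l1 + k)) l2)"
  unfolding segchr_def chor_def
  by (simp only: ex_less_add ex_le_add chr.sel add_Suc_right)

lemma ex_less_cong: "(\<And>k. k < l \<Longrightarrow> P k = Q k) \<Longrightarrow> (\<exists>k<l. P k) = (\<exists>k<l. Q k)"
  by blast

lemma segchr_cong:
  assumes "\<forall>k\<le>l. r k = r' k" "\<forall>k<l. x k = x' k"
  shows "segchr N c x r l = segchr N c x' r' l"
proof -
  have a: "(\<exists>k. 0 < k \<and> k \<le> l \<and> r k \<in> fin N) \<longleftrightarrow> (\<exists>k. 0 < k \<and> k \<le> l \<and> r' k \<in> fin N)"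
    using assms by auto
  have b: "wt N (r k) (x k) (r (Suc k)) = wt N (r' k) (x' k) (r' (Suc k))" if "k < l" for k
    using assms that by auto
  have c: "(\<exists>k<l. Q (wt N (r k) (x k) (r (Suc k)))) = (\<exists>k<l. Q (wt N (r' k) (x' k) (r' (Suc k))))" for Q
    by (rule ex_less_cong) (simp add: b)
  show ?thesis
    by (simp only: segchr_def a c[of "\<lambda>v. v = MInf"] c[of "isLo c"] c[of "isHi c"])
qed

lemma hs_cong1: "\<forall>k<l. x k = y k \<Longrightarrow> hs N c x l p q ch \<Longrightarrow> hs N c y l p q ch"
  unfolding hs_def
proof (elim exE conjE)
  fix r assume "\<forall>k<l. x k = y k" "\<forall>k\<le>l. r k < nstates N" "r 0 = p" "r l = q" "segchr N c x r l = ch"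
  moreover have "segchr N c x r l = segchr N c y r l" using \<open>\<forall>k<l. x k = y k\<close> by (intro segchr_cong) auto
  ultimately show "\<exists>r. (\<forall>k\<le>l. r k < nstates N) \<and> r 0 = p \<and> r l = q \<and> segchr N c y r l = ch" by auto
qed

lemma hs_cong: "\<forall>k<l. x k = y k \<Longrightarrow> hs N c x l = hs N c y l"
  by (intro ext iffI) (auto intro: hs_cong1)

lemma hs_comp: "hs N c x (l1 + l2) = pcomp (hs N c x l1) (hs N c (\<lambda>k. x (l1 + k)) l2)"
proof (intro ext iffI)
  fix p q ch
  assume "hs N c x (l1 + l2) p q ch"
  then obtain r where r: "\<forall>k\<le>l1 + l2. r k < nstates N" "r 0 = p" "r (l1 + l2) = q"
    "segchr N c x r (l1 + l2) = ch" unfolding hs_def by blast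
  have "hs N c x l1 p (r l1) (segchr N c x r l1)"
    unfolding hs_def using r by (intro exI[of _ r]) auto
  moreover have "hs N c (\<lambda>k. x (l1 + k)) l2 (r l1) q (segchr N c (\<lambda>k. x (l1 + k)) (\<lambda>k. r (l1 + k)) l2)"
    unfolding hs_def using r by (intro exI[of _ "\<lambda>k. r (l1 + k)"]) auto
  ultimately show "pcomp (hs N c x l1) (hs N c (\<lambda>k. x (l1 + k)) l2) p q ch"
    unfolding pcomp_def using r(4) segchr_split[of N c x r l1 l2] by blast
next
  fix p q ch
  assume "pcomp (hs N c x l1) (hs N c (\<lambda>k. x (l1 + k)) l2) p q ch"
  then obtain q' a b r1 r2 where
    r1: "\<forall>k\<le>l1. r1 k < nstates N" "r1 0 = p" "r1 l1 = q'" "segchr N c x r1 l1 = a" and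
    r2: "\<forall>k\<le>l2. r2 k < nstates N" "r2 0 = q'" "r2 l2 = q" "segchr N c (\<lambda>k. x (l1 + k)) r2 l2 = b" and
    ch: "ch = chor a b"
    unfolding pcomp_def hs_def by blast
  define r where "r = (\<lambda>k. if k \<le> l1 then r1 k else r2 (k - l1))"
  have "segchr N c x r l1 = a" using r1(4) by (subst segchr_cong[of _ r r1]) (auto simp: r_def)
  moreover have "segchr N c (\<lambda>k. x (l1 + k)) (\<lambda>k. r (l1 + k)) l2 = b"
    using r2(4) r1(3) r2(2) by (subst segchr_cong[of _ _ r2]) (auto simp: r_def)
  moreover have "\<forall>k\<le>l1 + l2. r k < nstates N" using r1 r2 by (auto simp: r_def)
  moreover have "r 0 = p" "r (l1 + l2) = q" using r1 r2 by (auto simp: r_def)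
  ultimately show "hs N c x (l1 + l2) p q ch"
    unfolding hs_def using ch segchr_split[of N c x r l1 l2] by metis
qed


section \<open>Threshold characterisation of the valuations\<close>

fun good :: "valuation_kind \<Rightarrow> ereal \<Rightarrow> (nat \<Rightarrow> qbar) \<Rightarrow> bool" where
  "good K1 c d \<longleftrightarrow> (\<forall>j. d j \<noteq> MInf) \<and> finite {j. isLo c (d j)} \<and> (infinite {j. isHi c (d j)} \<or> {j. isLo c (d j)} = {})"
| "good K2 c d \<longleftrightarrow> (\<forall>j. d j \<noteq> MInf) \<and> (infinite {j. isHi c (d j)} \<or> (finite {j. isLo c (d j)} \<and> ({j. isHi c (d j)} \<noteq> {} \<or> {j. isLo c (d j)} = {})))"
| "good K3 c d \<longleftrightarrow> (\<forall>j. d j \<noteq> MInf) \<and> ({j. isHi c (d j)} \<noteq> {} \<or> {j. isLo c (d j)} = {})"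

lemma to_ereal_MInf_iff [simp]: "to_ereal x = - \<infinity> \<longleftrightarrow> x = MInf"
  by (cases x) auto

lemma to_ereal_PInf_iff [simp]: "to_ereal x = \<infinity> \<longleftrightarrow> x = PInf"
  by (cases x) auto

lemma sup_attained:
  fixes f :: "'a \<Rightarrow> ereal"
  assumes "finite (f ` A)" "A \<noteq> {}"
  shows "\<exists>a\<in>A. (SUP x\<in>A. f x) = f a"
proof -
  have "Sup (f ` A) = Max (f ` A)" using assms by (simp add: Max_Sup)
  moreover have "Max (f ` A) \<in> f ` A" using assms by simp
  ultimately show ?thesis by auto
qed

lemma inf_attained:
  fixes f :: "'a \<Rightarrow> ereal"
  assumes "finite (f ` A)" "A \<noteq> {}"
  shows "\<exists>a\<in>A. (INF x\<in>A. f x) = f a"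
proof -
  have "Inf (f ` A) = Min (f ` A)" using assms by (simp add: Min_Inf)
  moreover have "Min (f ` A) \<in> f ` A" using assms by simp
  ultimately show ?thesis by auto
qed

lemma le_sup_finite_iff:
  fixes f :: "'a \<Rightarrow> ereal"
  assumes "finite (f ` A)" "c \<noteq> - \<infinity>"
  shows "c \<le> (SUP x\<in>A. f x) \<longleftrightarrow> (\<exists>x\<in>A. c \<le> f x)"
proof (cases "A = {}")
  case True
  then show ?thesis using assms by (simp add: bot_ereal_def)
next
  case False
  then obtain a where "a \<in> A" "(SUP x\<in>A. f x) = f a" using sup_attained[OF assms(1)] by blast
  then show ?thesis by (metis SUP_upper order_trans)
qed

lemma finite_range_sub: "finite (range f) \<Longrightarrow> finite (f ` A)"
  by (rule finite_subset[of _ "range f"]) auto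

lemma finite_Lo_iff: "finite {j::nat. P j} \<longleftrightarrow> (\<exists>i. \<forall>k\<ge>i. \<not> P k)"
proof
  assume "finite {j. P j}"
  then obtain b where "\<forall>j\<in>{j. P j}. j \<le> b" using finite_nat_set_iff_bounded_le by blast
  then show "\<exists>i. \<forall>k\<ge>i. \<not> P k" by (intro exI[of _ "Suc b"]) auto
next
  assume "\<exists>i. \<forall>k\<ge>i. \<not> P k"
  then obtain i where "\<forall>k\<ge>i. \<not> P k" by blast
  then have "{j. P j} \<subseteq> {..<i}" by (auto simp: not_le[symmetric])
  then show "finite {j. P j}" using finite_subset by blast
qed

lemma infinite_iff_unb: "infinite {j::nat. P j} \<longleftrightarrow> (\<forall>i. \<exists>k\<ge>i. P k)"
  using finite_Lo_iff[of P] by blast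

lemma val_good:
  assumes fr: "finite (range d)" and c: "c \<noteq> - \<infinity>"
  shows "c \<le> omega_val K (\<lambda>j. to_ereal (d j)) \<longleftrightarrow> good K c d"
proof -
  define D where "D = (\<lambda>j. to_ereal (d j))"
  have frD: "finite (D ` A)" for A unfolding D_def
    by (rule finite_subset[of _ "to_ereal ` range d"]) (use fr in auto)
  show ?thesis
  proof (cases "\<exists>i. d i = MInf")
    case True
    then have "omega_val K D = - \<infinity>"
      by (cases K) (auto simp: liminf_val_def limsup_val_def supminf_val_def D_def)
    moreover have "\<not> good K c d" using True by (cases K) auto
    ultimately show ?thesis using c by (simp add: D_def)
  next
    case noneg: False
    then have nm: "\<forall>j. d j \<noteq> MInf" by blast
    have Lo: "isLo c (d j) \<longleftrightarrow> D j \<noteq> \<infinity> \<and> D j < c" for j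
      using nm by (auto simp: isLo_def D_def)
    have Hi: "isHi c (d j) \<longleftrightarrow> D j \<noteq> \<infinity> \<and> c \<le> D j" for j
      using nm by (auto simp: isHi_def D_def)
    have nm': "\<not> (\<exists>i. D i = - \<infinity>)" using nm by (simp add: D_def)
    show ?thesis
    proof (cases "\<forall>i. D i = \<infinity>")
      case True
      then have "omega_val K D = \<infinity>" using nm'
        by (cases K) (auto simp: liminf_val_def limsup_val_def supminf_val_def)
      moreover have "{j. isLo c (d j)} = {}" "{j. isHi c (d j)} = {}" using True Lo Hi by auto
      ultimately show ?thesis using nm by (cases K) (auto simp: D_def)
    next
      case notall: False
      have notall': "(\<forall>i. D i = \<infinity>) = False" using notall by blast
      have nm'': "(\<exists>i. D i = - \<infinity>) = False" using nm' by blast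
      from notall obtain j0 where j0: "D j0 \<noteq> \<infinity>" by blast
      show ?thesis
      proof (cases K)
        case K3
        have "omega_val K D = (SUP k\<in>{k. D k \<noteq> \<infinity>}. D k)"
          using K3 by (simp add: supminf_val_def notall' nm'')
        then have "c \<le> omega_val K D \<longleftrightarrow> (\<exists>k. D k \<noteq> \<infinity> \<and> c \<le> D k)"
          using le_sup_finite_iff[OF frD c] by auto
        also have "\<dots> \<longleftrightarrow> good K c d"
        proof
          assume "\<exists>k. D k \<noteq> \<infinity> \<and> c \<le> D k"
          then show "good K c d" using K3 nm Hi by auto
        next
          assume "good K c d"
          then have "{j. isHi c (d j)} \<noteq> {} \<or> {j. isLo c (d j)} = {}" using K3 by simp
          then show "\<exists>k. D k \<noteq> \<infinity> \<and> c \<le> D k"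
          proof
            assume "{j. isHi c (d j)} \<noteq> {}" then show ?thesis using Hi by auto
          next
            assume "{j. isLo c (d j)} = {}" then show ?thesis using Lo j0 by (auto simp: not_less)
          qed
        qed
        finally show ?thesis by (simp add: D_def)
      next
        case K1
        show ?thesis
        proof (cases "infinite {i. D i \<noteq> \<infinity>}")
          case True
          have val: "omega_val K D = (SUP i. INF k \<in> {k. k \<ge> i \<and> D k \<noteq> \<infinity>}. D k)"
            using K1 True by (simp add: liminf_val_def notall' nm'')
          have ne: "{k. k \<ge> i \<and> D k \<noteq> \<infinity>} \<noteq> {}" for i
            using True infinite_iff_unb[of "\<lambda>k. D k \<noteq> \<infinity>"] by auto
          have fin: "finite ((\<lambda>i. INF k \<in> {k. k \<ge> i \<and> D k \<noteq> \<infinity>}. D k) ` UNIV)"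
          proof (rule finite_subset[OF _ frD[of UNIV]])
            show "range (\<lambda>i. INF k \<in> {k. k \<ge> i \<and> D k \<noteq> \<infinity>}. D k) \<subseteq> range D"
              using inf_attained[OF frD ne] by fastforce
          qed
          have "c \<le> omega_val K D \<longleftrightarrow> (\<exists>i. c \<le> (INF k \<in> {k. k \<ge> i \<and> D k \<noteq> \<infinity>}. D k))"
            using le_sup_finite_iff[OF fin c] val by simp
          also have "\<dots> \<longleftrightarrow> (\<exists>i. \<forall>k\<ge>i. \<not> isLo c (d k))"
            apply (simp add: le_INF_iff Lo not_less) by blast
          also have "\<dots> \<longleftrightarrow> finite {j. isLo c (d j)}" by (simp add: finite_Lo_iff)
          also have "\<dots> \<longleftrightarrow> good K c d"
          proof -
            have "{i. D i \<noteq> \<infinity>} = {j. isLo c (d j)} \<union> {j. isHi c (d j)}"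
              using Lo Hi by auto
            then have "finite {j. isLo c (d j)} \<Longrightarrow> infinite {j. isHi c (d j)}" using True by auto
            then show ?thesis using K1 nm by auto
          qed
          finally show ?thesis by (simp add: D_def)
        next
          case False
          have val: "omega_val K D = (INF i \<in> {i. D i \<noteq> \<infinity>}. D i)"
            using K1 False by (simp add: liminf_val_def notall' nm'')
          have "c \<le> omega_val K D \<longleftrightarrow> {j. isLo c (d j)} = {}"
            using val by (auto simp: le_INF_iff Lo not_less)
          also have "\<dots> \<longleftrightarrow> good K c d"
          proof -
            have "{j. isLo c (d j)} \<subseteq> {i. D i \<noteq> \<infinity>}" "{j. isHi c (d j)} \<subseteq> {i. D i \<noteq> \<infinity>}"
              using Lo Hi by auto
            then have "finite {j. isLo c (d j)}" "finite {j. isHi c (d j)}" using False finite_subset by blast+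
            then show ?thesis using K1 nm by auto
          qed
          finally show ?thesis by (simp add: D_def)
        qed
      next
        case K2
        show ?thesis
        proof (cases "infinite {i. D i \<noteq> \<infinity>}")
          case True
          have val: "omega_val K D = (INF i. SUP k \<in> {k. k \<ge> i \<and> D k \<noteq> \<infinity>}. D k)"
            using K2 True by (simp add: limsup_val_def notall' nm'')
          have "c \<le> omega_val K D \<longleftrightarrow> (\<forall>i. c \<le> (SUP k \<in> {k. k \<ge> i \<and> D k \<noteq> \<infinity>}. D k))"
            using val by (simp add: le_INF_iff)
          also have "\<dots> \<longleftrightarrow> (\<forall>i. \<exists>k\<ge>i. isHi c (d k))"
            using le_sup_finite_iff[OF frD c] by (simp add: Hi)
          also have "\<dots> \<longleftrightarrow> infinite {j. isHi c (d j)}" by (simp add: infinite_iff_unb)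
          also have "\<dots> \<longleftrightarrow> good K c d"
          proof -
            have "{i. D i \<noteq> \<infinity>} = {j. isLo c (d j)} \<union> {j. isHi c (d j)}"
              using Lo Hi by auto
            then have "finite {j. isHi c (d j)} \<Longrightarrow> infinite {j. isLo c (d j)}" using True by auto
            then show ?thesis using K2 nm by auto
          qed
          finally show ?thesis by (simp add: D_def)
        next
          case False
          have val: "omega_val K D = (SUP i \<in> {i. D i \<noteq> \<infinity>}. D i)"
            using K2 False by (simp add: limsup_val_def notall' nm'')
          have "c \<le> omega_val K D \<longleftrightarrow> {j. isHi c (d j)} \<noteq> {}"
            using le_sup_finite_iff[OF frD c] val by (auto simp: Hi)
          also have "\<dots> \<longleftrightarrow> good K c d"
          proof -
            have "{j. isLo c (d j)} \<subseteq> {i. D i \<noteq> \<infinity>}" "{j. isHi c (d j)} \<subseteq> {i. D i \<noteq> \<infinity>}"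
              using Lo Hi by auto
            then have "finite {j. isLo c (d j)}" "finite {j. isHi c (d j)}" using False finite_subset by blast+
            moreover have "{j. isHi c (d j)} = {} \<Longrightarrow> {j. isLo c (d j)} \<noteq> {}"
              using j0 Lo Hi by (auto simp: not_less)
            ultimately show ?thesis using K2 nm by auto
          qed
          finally show ?thesis by (simp add: D_def)
        qed
      qed
    qed
  qed
qed


definition wseq :: "wba \<Rightarrow> (nat \<Rightarrow> nat) \<Rightarrow> (nat \<Rightarrow> nat) \<Rightarrow> nat \<Rightarrow> qbar" where
  "wseq N w \<rho> = (\<lambda>j. wt N (\<rho> j) (w j) (\<rho> (Suc j)))"

definition Lw :: "valuation_kind \<Rightarrow> wba \<Rightarrow> ereal \<Rightarrow> (nat \<Rightarrow> nat) \<Rightarrow> bool" where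
  "Lw K N c w \<longleftrightarrow> (\<exists>\<rho>. successful_run N \<rho> \<and> good K c (wseq N w \<rho>))"

fun kcond :: "valuation_kind \<Rightarrow> chr \<Rightarrow> chr \<Rightarrow> bool" where
  "kcond K1 a b \<longleftrightarrow> \<not> cL b \<and> (cH b \<or> \<not> cL a)"
| "kcond K2 a b \<longleftrightarrow> cH b \<or> (\<not> cL b \<and> \<not> cH b \<and> (cH a \<or> \<not> cL a))"
| "kcond K3 a b \<longleftrightarrow> cH a \<or> cH b \<or> (\<not> cL a \<and> \<not> cL b)"

definition acc :: "valuation_kind \<Rightarrow> wba \<Rightarrow> (nat \<Rightarrow> nat \<Rightarrow> chr \<Rightarrow> bool) \<Rightarrow> (nat \<Rightarrow> nat \<Rightarrow> chr \<Rightarrow> bool) \<Rightarrow> bool" where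
  "acc K N S E \<longleftrightarrow> (\<exists>p\<in>init N. \<exists>q a b. S p q a \<and> E q q b \<and> cF b \<and> \<not> cN a \<and> \<not> cN b \<and> kcond K a b)"

lemma succ_iff:
  assumes "wf_wba N"
  shows "successful_run N \<rho> \<longleftrightarrow> (\<forall>j. \<rho> j < nstates N) \<and> \<rho> 0 \<in> init N \<and> infinite {j. \<rho> j \<in> fin N}"
proof -
  have finF: "finite (fin N)" using assms unfolding wf_wba_def using finite_subset by blast
  have "(\<exists>q\<in>fin N. infinite {j. \<rho> j = q}) \<longleftrightarrow> infinite {j. \<rho> j \<in> fin N}"
  proof
    assume "\<exists>q\<in>fin N. infinite {j. \<rho> j = q}"
    then obtain q where "q \<in> fin N" "infinite {j. \<rho> j = q}" by blast
    moreover have "{j. \<rho> j = q} \<subseteq> {j. \<rho> j \<in> fin N}" using \<open>q \<in> fin N\<close> by auto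
    ultimately show "infinite {j. \<rho> j \<in> fin N}" using finite_subset by blast
  next
    assume inf: "infinite {j. \<rho> j \<in> fin N}"
    have "finite (\<rho> ` {j. \<rho> j \<in> fin N})" by (rule finite_subset[OF _ finF]) auto
    from pigeonhole_infinite[OF inf this] obtain a0 where
      a0: "\<rho> a0 \<in> fin N" "infinite {a \<in> {j. \<rho> j \<in> fin N}. \<rho> a = \<rho> a0}" by auto
    moreover have "{a \<in> {j. \<rho> j \<in> fin N}. \<rho> a = \<rho> a0} \<subseteq> {j. \<rho> j = \<rho> a0}" by auto
    ultimately show "\<exists>q\<in>fin N. infinite {j. \<rho> j = q}" using finite_subset by blast
  qed
  then show ?thesis unfolding successful_run_def by (simp add: frequently_cofinite)
qed

definition blk :: "(nat \<Rightarrow> nat) \<Rightarrow> nat \<Rightarrow> nat" where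
  "blk t k = (LEAST i. k < t (Suc i))"

lemma blk_props:
  assumes "strict_mono t" "t 0 = 0"
  shows "t (blk t k) \<le> k \<and> k < t (Suc (blk t k))"
proof -
  have ex: "k < t (Suc k)" using seq_suble[OF assms(1), of "Suc k"] by simp
  have 1: "k < t (Suc (blk t k))" unfolding blk_def by (rule LeastI[of _ k]) (rule ex)
  have 2: "t (blk t k) \<le> k"
  proof (cases "blk t k")
    case 0 then show ?thesis using assms by simp
  next
    case (Suc j)
    then have "\<not> k < t (Suc j)" using not_less_Least[of j "\<lambda>i. k < t (Suc i)"] unfolding blk_def by simp
    then show ?thesis using Suc by simp
  qed
  show ?thesis using 1 2 by simp
qed

lemma blk_eq:
  assumes "strict_mono t" "t 0 = 0" "t i \<le> k" "k < t (Suc i)"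
  shows "blk t k = i"
proof -
  have b: "t (blk t k) \<le> k" "k < t (Suc (blk t k))" using blk_props[OF assms(1,2)] by auto
  show ?thesis
  proof (rule ccontr)
    assume "blk t k \<noteq> i"
    then consider "blk t k < i" | "i < blk t k" by linarith
    then show False
    proof cases
      case 1
      then have "t (Suc (blk t k)) \<le> t i" using assms(1) by (simp add: strict_mono_less_eq)
      then show False using b assms by linarith
    next
      case 2
      then have "t (Suc i) \<le> t (blk t k)" using assms(1) by (simp add: strict_mono_less_eq)
      then show False using b assms by linarith
    qed
  qed
qed

lemma segchr_shift_cL: "cL (segchr N c (\<lambda>k. w (u + k)) (\<lambda>k. \<rho> (u + k)) l) \<longleftrightarrow> (\<exists>k<l. isLo c (wseq N w \<rho> (u + k)))"
  by (simp add: segchr_def wseq_def)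
lemma segchr_shift_cH: "cH (segchr N c (\<lambda>k. w (u + k)) (\<lambda>k. \<rho> (u + k)) l) \<longleftrightarrow> (\<exists>k<l. isHi c (wseq N w \<rho> (u + k)))"
  by (simp add: segchr_def wseq_def)
lemma segchr_shift_cN: "cN (segchr N c (\<lambda>k. w (u + k)) (\<lambda>k. \<rho> (u + k)) l) \<longleftrightarrow> (\<exists>k<l. wseq N w \<rho> (u + k) = MInf)"
  by (simp add: segchr_def wseq_def)
lemma segchr_shift_cF: "cF (segchr N c (\<lambda>k. w (u + k)) (\<lambda>k. \<rho> (u + k)) l) \<longleftrightarrow> (\<exists>k. 0 < k \<and> k \<le> l \<and> \<rho> (u + k) \<in> fin N)"
  by (simp add: segchr_def)


lemma good_noneg: "good K c d \<Longrightarrow> d j \<noteq> MInf"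
  by (cases K) auto

lemma lasso_fwd:
  fixes t :: "nat \<Rightarrow> nat"
  assumes wf: "wf_wba N" and t: "strict_mono t" "t 0 = 0"
    and S: "\<forall>j\<ge>1. hs N c w (t j) = S"
    and E: "\<forall>i j. 1 \<le> i \<longrightarrow> i < j \<longrightarrow> hs N c (\<lambda>k. w (t i + k)) (t j - t i) = E"
    and L: "Lw K N c w"
  shows "acc K N S E"
proof -
  obtain \<rho> where succ: "successful_run N \<rho>" and g: "good K c (wseq N w \<rho>)"
    using L unfolding Lw_def by blast
  define d where "d = wseq N w \<rho>"
  define Lo where "Lo = {j. isLo c (d j)}"
  define Hi where "Hi = {j. isHi c (d j)}"
  have st: "\<forall>j. \<rho> j < nstates N" and ini: "\<rho> 0 \<in> init N" and infF: "infinite {j. \<rho> j \<in> fin N}"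
    using succ succ_iff[OF wf] by auto
  have noneg: "\<forall>j. d j \<noteq> MInf" using g good_noneg unfolding d_def by blast
  have A: "infinite {i::nat. 1 \<le> i}"
    unfolding infinite_nat_iff_unbounded_le by (metis mem_Collect_eq le_add2 add.commute le_add1 order_trans)
  have B: "finite ((\<lambda>i. \<rho> (t i)) ` {i. 1 \<le> i})"
    by (rule finite_subset[of _ "{..<nstates N}"]) (use st in auto)
  obtain a0 where
    "a0 \<in> {i. 1 \<le> i}" "infinite {i \<in> {i. 1 \<le> i}. \<rho> (t i) = \<rho> (t a0)}"
    using pigeonhole_infinite[of "{i::nat. 1 \<le> i}" "\<lambda>i. \<rho> (t i)"] A B by blast
  then obtain q where infR: "infinite {i. 1 \<le> i \<and> \<rho> (t i) = q}" by auto
  define R where "R = {i. 1 \<le> i \<and> \<rho> (t i) = q}"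
  have unbR: "\<exists>i\<ge>M. i \<in> R" for M using infR unfolding R_def infinite_nat_iff_unbounded_le by blast
  have "\<exists>B. finite Lo \<longrightarrow> (\<forall>k\<in>Lo. k < B)" by (auto simp: finite_nat_set_iff_bounded)
  then obtain B1 where B1: "finite Lo \<Longrightarrow> \<forall>k\<in>Lo. k < B1" by blast
  have "\<exists>B. finite Hi \<longrightarrow> (\<forall>k\<in>Hi. k < B)" by (auto simp: finite_nat_set_iff_bounded)
  then obtain B2 where B2: "finite Hi \<Longrightarrow> \<forall>k\<in>Hi. k < B2" by blast
  have "\<exists>B. Hi \<noteq> {} \<longrightarrow> (\<exists>k\<in>Hi. k < B)" by (cases "Hi = {}") auto
  then obtain B3 where B3: "Hi \<noteq> {} \<Longrightarrow> \<exists>k\<in>Hi. k < B3" by blast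
  obtain i0 where i0: "i0 \<ge> B1 + B2 + B3" "i0 \<in> R" using unbR by blast
  have ti0: "t i0 \<ge> B1 + B2 + B3" using i0(1) seq_suble[OF t(1), of i0] by linarith
  obtain fpos where fpos: "fpos > t i0" "\<rho> fpos \<in> fin N"
    using infF unfolding infinite_nat_iff_unbounded by blast
  have "\<exists>h. infinite Hi \<longrightarrow> h \<ge> t i0 \<and> h \<in> Hi"
    using infinite_nat_iff_unbounded_le[of Hi] by blast
  then obtain hpos where hpos: "infinite Hi \<Longrightarrow> hpos \<ge> t i0 \<and> hpos \<in> Hi" by blast
  obtain j0 where j0: "j0 \<ge> fpos + hpos + i0 + 1" "j0 \<in> R" using unbR by blast
  have tj0: "t j0 \<ge> j0" using seq_suble[OF t(1)] by simp
  have ij: "1 \<le> i0" "i0 < j0" using i0 j0 unfolding R_def by auto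
  have tij: "t i0 < t j0" using ij t(1) by (simp add: strict_mono_less)
  define ll where "ll = t j0 - t i0"
  define a where "a = segchr N c w \<rho> (t i0)"
  define b where "b = segchr N c (\<lambda>k. w (t i0 + k)) (\<lambda>k. \<rho> (t i0 + k)) ll"
  have q0: "\<rho> (t i0) = q" "\<rho> (t j0) = q" using i0 j0 unfolding R_def by auto
  have Sa: "S (\<rho> 0) q a"
  proof -
    have "hs N c w (t i0) (\<rho> 0) q a" unfolding hs_def a_def using st q0 by (intro exI[of _ \<rho>]) auto
    then show ?thesis using S ij by auto
  qed
  have Eb: "E q q b"
  proof -
    have "hs N c (\<lambda>k. w (t i0 + k)) ll q q b" unfolding hs_def b_def ll_def
      using st q0 tij by (intro exI[of _ "\<lambda>k. \<rho> (t i0 + k)"]) auto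
    then show ?thesis using E ij unfolding ll_def by auto
  qed
  have aL: "cL a \<longleftrightarrow> (\<exists>k<t i0. k \<in> Lo)"
    using segchr_shift_cL[of N c w 0 \<rho> "t i0"] by (simp add: a_def Lo_def d_def)
  have aH: "cH a \<longleftrightarrow> (\<exists>k<t i0. k \<in> Hi)"
    using segchr_shift_cH[of N c w 0 \<rho> "t i0"] by (simp add: a_def Hi_def d_def)
  have aN: "\<not> cN a"
    using segchr_shift_cN[of N c w 0 \<rho> "t i0"] noneg by (simp add: a_def d_def)
  have bL: "cL b \<longleftrightarrow> (\<exists>k<ll. t i0 + k \<in> Lo)"
    using segchr_shift_cL[of N c w "t i0" \<rho> ll] by (simp add: b_def Lo_def d_def)
  have bH: "cH b \<longleftrightarrow> (\<exists>k<ll. t i0 + k \<in> Hi)"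
    using segchr_shift_cH[of N c w "t i0" \<rho> ll] by (simp add: b_def Hi_def d_def)
  have bN: "\<not> cN b"
    using segchr_shift_cN[of N c w "t i0" \<rho> ll] noneg by (simp add: b_def d_def)
  have bF: "cF b"
  proof -
    have "0 < fpos - t i0" "fpos - t i0 \<le> ll" "\<rho> (t i0 + (fpos - t i0)) \<in> fin N"
      using fpos j0 tj0 unfolding ll_def by auto
    then show ?thesis using segchr_shift_cF[of N c w "t i0" \<rho> ll] unfolding b_def by blast
  qed
  have LoB: "finite Lo \<Longrightarrow> \<not> cL b" using bL B1 ti0 by fastforce
  have HiB: "finite Hi \<Longrightarrow> \<not> cH b" using bH B2 ti0 by fastforce
  have HiA: "finite Hi \<Longrightarrow> cH a \<longleftrightarrow> Hi \<noteq> {}" using aH B2 ti0 by fastforce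
  have LoA: "finite Lo \<Longrightarrow> cL a \<longleftrightarrow> Lo \<noteq> {}" using aL B1 ti0 by fastforce
  have HiA2: "Hi \<noteq> {} \<Longrightarrow> cH a" using aH B3 ti0 by fastforce
  have HiInf: "infinite Hi \<Longrightarrow> cH b"
  proof -
    assume "infinite Hi"
    then have "hpos \<ge> t i0" "hpos \<in> Hi" using hpos by auto
    moreover have "hpos - t i0 < ll" using j0 tj0 calculation unfolding ll_def by linarith
    ultimately show "cH b" using bH by (metis le_add_diff_inverse)
  qed
  have LoE: "Lo = {} \<Longrightarrow> \<not> cL a \<and> \<not> cL b" using aL bL by auto
  have gK: "good K c d" using g unfolding d_def .
  have "kcond K a b"
  proof (cases K)
    case K1
    then show ?thesis using gK LoB HiInf LoE by (auto simp: Lo_def Hi_def)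
  next
    case K2
    then show ?thesis using gK LoB HiB HiInf HiA2 LoE by (auto simp: Lo_def Hi_def)
  next
    case K3
    then show ?thesis using gK HiA2 LoE by (auto simp: Lo_def Hi_def)
  qed
  then show ?thesis unfolding acc_def using ini Sa Eb bF aN bN by blast
qed


lemma lasso_bwd:
  fixes t :: "nat \<Rightarrow> nat"
  assumes wf: "wf_wba N" and t: "strict_mono t" "t 0 = 0"
    and S: "\<forall>j\<ge>1. hs N c w (t j) = S"
    and E: "\<forall>i j. 1 \<le> i \<longrightarrow> i < j \<longrightarrow> hs N c (\<lambda>k. w (t i + k)) (t j - t i) = E"
    and A: "acc K N S E"
  shows "Lw K N c w"
proof -
  obtain p q a b where p: "p \<in> init N" and Sa: "S p q a" and Eb: "E q q b" and bF: "cF b"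
    and aN: "\<not> cN a" and bN: "\<not> cN b" and kc: "kcond K a b"
    using A unfolding acc_def by blast
  define len where "len i = t (Suc i) - t i" for i
  have tmono: "t i < t (Suc i)" for i using t(1) by (simp add: strict_mono_less)
  have "\<forall>i. \<exists>r. (\<forall>k\<le>len i. r k < nstates N) \<and> r 0 = (if i = 0 then p else q) \<and> r (len i) = q
            \<and> segchr N c (\<lambda>k. w (t i + k)) r (len i) = (if i = 0 then a else b)"
  proof
    fix i
    show "\<exists>r. (\<forall>k\<le>len i. r k < nstates N) \<and> r 0 = (if i = 0 then p else q) \<and> r (len i) = q
            \<and> segchr N c (\<lambda>k. w (t i + k)) r (len i) = (if i = 0 then a else b)"
    proof (cases "i = 0")
      case True
      have "hs N c w (t 1) p q a" using S Sa by auto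
      then show ?thesis using True t(2) unfolding hs_def len_def by simp
    next
      case False
      have "hs N c (\<lambda>k. w (t i + k)) (len i) q q b" using E Eb False unfolding len_def by auto
      then show ?thesis using False unfolding hs_def by simp
    qed
  qed
  then obtain Rr where Rr: "\<And>i. (\<forall>k\<le>len i. Rr i k < nstates N)" "\<And>i. Rr i 0 = (if i = 0 then p else q)"
    "\<And>i. Rr i (len i) = q" "\<And>i. segchr N c (\<lambda>k. w (t i + k)) (Rr i) (len i) = (if i = 0 then a else b)"
    by metis
  define \<rho> where "\<rho> k = Rr (blk t k) (k - t (blk t k))" for k
  have bl: "\<rho> k = Rr i (k - t i)" if "t i \<le> k" "k \<le> t (Suc i)" for i k
  proof (cases "k < t (Suc i)")
    case True
    then show ?thesis using blk_eq[OF t that(1) True] unfolding \<rho>_def by simp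
  next
    case False
    then have k: "k = t (Suc i)" using that by simp
    have "blk t k = Suc i" using blk_eq[OF t, of "Suc i" k] k tmono[of "Suc i"] by simp
    then have "\<rho> k = q" unfolding \<rho>_def using Rr(2) k by simp
    moreover have "Rr i (k - t i) = q" using Rr(3) k unfolding len_def by simp
    ultimately show ?thesis by simp
  qed
  define C where "C i = segchr N c (\<lambda>k. w (t i + k)) (\<lambda>k. \<rho> (t i + k)) (len i)" for i
  have C: "C i = (if i = 0 then a else b)" for i
  proof -
    have "\<forall>k\<le>len i. \<rho> (t i + k) = Rr i k"
    proof (intro allI impI)
      fix k assume "k \<le> len i"
      then have "t i \<le> t i + k" "t i + k \<le> t (Suc i)" using tmono[of i] unfolding len_def by auto
      from bl[OF this] show "\<rho> (t i + k) = Rr i k" by simp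
    qed
    then have "C i = segchr N c (\<lambda>k. w (t i + k)) (Rr i) (len i)"
      unfolding C_def by (intro segchr_cong) auto
    then show ?thesis using Rr(4) by simp
  qed
  have blkp: "t (blk t k) \<le> k" "k < t (Suc (blk t k))" for k using blk_props[OF t] by auto
  have pos: "k = t (blk t k) + (k - t (blk t k))" "k - t (blk t k) < len (blk t k)" for k
    using blkp[of k] unfolding len_def by auto
  define d where "d = wseq N w \<rho>"
  have st: "\<rho> k < nstates N" for k
    using Rr(1)[of "blk t k"] pos[of k] unfolding \<rho>_def by auto
  have r0: "\<rho> 0 = p" using bl[of 0 0] t(2) Rr(2)[of 0] by simp
  have posL: "isLo c (d k) \<Longrightarrow> cL (C (blk t k))" for k
    using segchr_shift_cL[of N c w "t (blk t k)" \<rho> "len (blk t k)"] pos[of k] unfolding C_def d_def by metis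
  have posH: "isHi c (d k) \<Longrightarrow> cH (C (blk t k))" for k
    using segchr_shift_cH[of N c w "t (blk t k)" \<rho> "len (blk t k)"] pos[of k] unfolding C_def d_def by metis
  have posN: "d k = MInf \<Longrightarrow> cN (C (blk t k))" for k
    using segchr_shift_cN[of N c w "t (blk t k)" \<rho> "len (blk t k)"] pos[of k] unfolding C_def d_def by metis
  have noneg: "\<forall>k. d k \<noteq> MInf" using posN C aN bN by (metis (full_types))
  have blk0: "blk t k = 0 \<Longrightarrow> k < t 1" for k using blkp[of k] by simp
  have infF: "infinite {j. \<rho> j \<in> fin N}"
    unfolding infinite_nat_iff_unbounded_le
  proof
    fix M
    have "cF (C (Suc M))" using C bF by simp
    then obtain k where "0 < k" "\<rho> (t (Suc M) + k) \<in> fin N"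
      using segchr_shift_cF unfolding C_def by blast
    moreover have "t (Suc M) + k \<ge> M" using seq_suble[OF t(1), of "Suc M"] by simp
    ultimately show "\<exists>j\<ge>M. j \<in> {j. \<rho> j \<in> fin N}" by blast
  qed
  have succ: "successful_run N \<rho>" using succ_iff[OF wf] st r0 p infF by auto
  define Lo where "Lo = {j. isLo c (d j)}"
  define Hi where "Hi = {j. isHi c (d j)}"
  have LoF: "\<not> cL b \<Longrightarrow> finite Lo"
  proof -
    assume nb: "\<not> cL b"
    have "Lo \<subseteq> {..<t 1}"
    proof
      fix k assume "k \<in> Lo"
      then have "cL (C (blk t k))" using posL unfolding Lo_def by blast
      then have "blk t k = 0" using C nb by (cases "blk t k = 0") auto
      then show "k \<in> {..<t 1}" using blk0 by auto
    qed
    then show "finite Lo" using finite_subset by blast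
  qed
  have LoE: "\<not> cL a \<Longrightarrow> \<not> cL b \<Longrightarrow> Lo = {}"
    using posL C unfolding Lo_def by (metis (full_types) empty_Collect_eq)
  have HiI: "cH b \<Longrightarrow> infinite Hi"
    unfolding infinite_nat_iff_unbounded_le
  proof
    fix M assume hb: "cH b"
    have "cH (C (Suc M))" using C hb by simp
    then obtain k where "isHi c (d (t (Suc M) + k))"
      using segchr_shift_cH unfolding C_def d_def by blast
    moreover have "t (Suc M) + k \<ge> M" using seq_suble[OF t(1), of "Suc M"] by simp
    ultimately show "\<exists>j\<ge>M. j \<in> Hi" unfolding Hi_def by blast
  qed
  have HiN: "cH a \<or> cH b \<Longrightarrow> Hi \<noteq> {}"
  proof -
    assume "cH a \<or> cH b"
    then obtain i where "cH (C i)"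
    proof
      assume "cH a" then show ?thesis using that[of 0] C[of 0] by simp
    next
      assume "cH b" then show ?thesis using that[of 1] C[of 1] by simp
    qed
    then obtain k where "isHi c (d (t i + k))"
      using segchr_shift_cH unfolding C_def d_def by blast
    then show "Hi \<noteq> {}" unfolding Hi_def by blast
  qed
  have "good K c d"
  proof (cases K)
    case K1
    then show ?thesis using kc noneg LoF LoE HiI unfolding Lo_def Hi_def by auto
  next
    case K2
    then show ?thesis using kc noneg LoF LoE HiI HiN unfolding Lo_def Hi_def by auto
  next
    case K3
    then show ?thesis using kc noneg LoE HiN unfolding Lo_def Hi_def by auto
  qed
  then show ?thesis unfolding Lw_def d_def using succ by blast
qed

lemma lasso:
  fixes t :: "nat \<Rightarrow> nat"
  assumes wf: "wf_wba N" and t: "strict_mono t" "t 0 = 0"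
    and S: "\<forall>j\<ge>1. hs N c w (t j) = S"
    and E: "\<forall>i j. 1 \<le> i \<longrightarrow> i < j \<longrightarrow> hs N c (\<lambda>k. w (t i + k)) (t j - t i) = E"
  shows "Lw K N c w \<longleftrightarrow> acc K N S E"
  using lasso_fwd[OF assms] lasso_bwd[OF assms] by blast


section \<open>Finite words, concatenation, profiles of lasso words\<close>

definition cat :: "(nat \<Rightarrow> nat) \<Rightarrow> nat \<Rightarrow> (nat \<Rightarrow> nat) \<Rightarrow> nat \<Rightarrow> nat" where
  "cat x lx y = (\<lambda>k. if k < lx then x k else y (k - lx))"

lemma hs_cat: "hs N c (cat x lx y) (lx + ly) = pcomp (hs N c x lx) (hs N c y ly)"
proof -
  have "hs N c (cat x lx y) lx = hs N c x lx" by (rule hs_cong) (simp add: cat_def)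
  moreover have "hs N c (\<lambda>k. cat x lx y (lx + k)) ly = hs N c y ly" by (rule hs_cong) (simp add: cat_def)
  ultimately show ?thesis using hs_comp[of N c "cat x lx y" lx ly] by simp
qed

definition idem :: "wba \<Rightarrow> ereal \<Rightarrow> (nat \<Rightarrow> nat) \<Rightarrow> nat \<Rightarrow> (nat \<Rightarrow> nat) \<Rightarrow> nat \<Rightarrow> bool" where
  "idem N c u lu v lv \<longleftrightarrow> hs N c (cat u lu v) (lu + lv) = hs N c u lu \<and> hs N c (cat v lv v) (lv + lv) = hs N c v lv"

definition lassow :: "(nat \<Rightarrow> nat) \<Rightarrow> nat \<Rightarrow> (nat \<Rightarrow> nat) \<Rightarrow> nat \<Rightarrow> nat \<Rightarrow> nat" where
  "lassow u lu v lv = (\<lambda>k. if k < lu then u k else v ((k - lu) mod lv))"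

lemma lasso_word:
  assumes wf: "wf_wba N" and lu: "1 \<le> lu" and lv: "1 \<le> lv" and id: "idem N c u lu v lv"
  shows "Lw K N c (lassow u lu v lv) \<longleftrightarrow> acc K N (hs N c u lu) (hs N c v lv)"
proof -
  define w where "w = lassow u lu v lv"
  define t where "t i = (if i = 0 then 0 else lu + (i - 1) * lv)" for i
  have vv: "hs N c v lv = pcomp (hs N c v lv) (hs N c v lv)"
    using id hs_cat[of N c v lv v lv] unfolding idem_def by simp
  have uv: "hs N c u lu = pcomp (hs N c u lu) (hs N c v lv)"
    using id hs_cat[of N c u lu v lv] unfolding idem_def by simp
  have blockv: "hs N c (\<lambda>k. w (lu + i * lv + k)) lv = hs N c v lv" for i
  proof (rule hs_cong, intro allI impI)
    fix k assume "k < lv"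
    have "(i * lv + k) mod lv = k" using \<open>k < lv\<close> by simp
    then show "w (lu + i * lv + k) = v k" unfolding w_def lassow_def by (simp add: add.assoc)
  qed
  have V: "hs N c (\<lambda>k. w (lu + i * lv + k)) (Suc j * lv) = hs N c v lv" for i j
  proof (induct j arbitrary: i)
    case 0
    then show ?case using blockv by simp
  next
    case (Suc j)
    have "hs N c (\<lambda>k. w (lu + i * lv + k)) (Suc (Suc j) * lv) = hs N c (\<lambda>k. w (lu + i * lv + k)) (lv + Suc j * lv)"
      by (simp add: algebra_simps)
    also have "\<dots> = pcomp (hs N c (\<lambda>k. w (lu + i * lv + k)) lv) (hs N c (\<lambda>k. w (lu + i * lv + (lv + k))) (Suc j * lv))"
      by (rule hs_comp)
    also have "(\<lambda>k. w (lu + i * lv + (lv + k))) = (\<lambda>k. w (lu + Suc i * lv + k))" by (simp add: algebra_simps)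
    also have "hs N c (\<lambda>k. w (lu + Suc i * lv + k)) (Suc j * lv) = hs N c v lv" by (rule Suc)
    also have "hs N c (\<lambda>k. w (lu + i * lv + k)) lv = hs N c v lv" by (rule blockv)
    finally show ?case using vv by simp
  qed
  have U: "hs N c w (lu + j * lv) = hs N c u lu" for j
  proof (induct j)
    case 0
    show ?case by simp (rule hs_cong, simp add: w_def lassow_def)
  next
    case (Suc j)
    have "hs N c w (lu + Suc j * lv) = hs N c w ((lu + j * lv) + lv)" by (simp add: algebra_simps)
    also have "\<dots> = pcomp (hs N c w (lu + j * lv)) (hs N c (\<lambda>k. w (lu + j * lv + k)) lv)"
      by (rule hs_comp)
    finally show ?case using Suc blockv uv by simp
  qed
  have tm: "strict_mono t" unfolding strict_mono_Suc_iff
  proof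
    fix n
    show "t n < t (Suc n)"
    proof (cases n)
      case 0 then show ?thesis using lu by (simp add: t_def)
    next
      case (Suc n') then show ?thesis using lv by (simp add: t_def)
    qed
  qed
  have t0: "t 0 = 0" by (simp add: t_def)
  have S: "\<forall>j\<ge>1. hs N c w (t j) = hs N c u lu" using U by (auto simp: t_def)
  have E: "\<forall>i j. 1 \<le> i \<longrightarrow> i < j \<longrightarrow> hs N c (\<lambda>k. w (t i + k)) (t j - t i) = hs N c v lv"
  proof (intro allI impI)
    fix i j :: nat assume ij: "1 \<le> i" "i < j"
    obtain a where a: "i = Suc a" using ij by (cases i) auto
    obtain dd where dd: "j = i + Suc dd" using ij by (metis less_iff_Suc_add add_Suc_right)
    have "t j - t i = Suc (j - i - 1) * lv" "t i = lu + (i - 1) * lv"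
      unfolding t_def using a dd by (simp_all add: algebra_simps)
    then show "hs N c (\<lambda>k. w (t i + k)) (t j - t i) = hs N c v lv" using V by simp
  qed
  show ?thesis using lasso[OF wf tm t0 S E] unfolding w_def .
qed


lemma idem_iff: "idem N c u lu v lv \<longleftrightarrow> pcomp (hs N c u lu) (hs N c v lv) = hs N c u lu \<and> pcomp (hs N c v lv) (hs N c v lv) = hs N c v lv"
  unfolding idem_def hs_cat ..

section \<open>Joint profiles and shortening\<close>

definition JP :: "wba \<Rightarrow> wba \<Rightarrow> ereal \<Rightarrow> (nat \<Rightarrow> nat) \<Rightarrow> nat \<Rightarrow> (bool \<times> nat \<times> nat \<times> chr) set" where
  "JP N1 N2 c x l = {(z, p, q, ch). if z then hs N2 c x l p q ch else hs N1 c x l p q ch}"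

lemma JP_eq: "JP N1 N2 c x l = JP N1 N2 c y l' \<longleftrightarrow> hs N1 c x l = hs N1 c y l' \<and> hs N2 c x l = hs N2 c y l'"
proof
  assume J: "JP N1 N2 c x l = JP N1 N2 c y l'"
  have "hs N1 c x l p q ch \<longleftrightarrow> hs N1 c y l' p q ch" for p q ch
    using arg_cong[OF J, of "\<lambda>S. (False, p, q, ch) \<in> S"] by (simp add: JP_def)
  moreover have "hs N2 c x l p q ch \<longleftrightarrow> hs N2 c y l' p q ch" for p q ch
    using arg_cong[OF J, of "\<lambda>S. (True, p, q, ch) \<in> S"] by (simp add: JP_def)
  ultimately show "hs N1 c x l = hs N1 c y l' \<and> hs N2 c x l = hs N2 c y l'" by (auto intro!: ext)
qed (simp add: JP_def)

lemma hs_lt: "hs N c x l p q ch \<Longrightarrow> p < nstates N \<and> q < nstates N"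
  unfolding hs_def by auto

definition UJ :: "nat \<Rightarrow> (bool \<times> nat \<times> nat \<times> chr) set" where
  "UJ M = UNIV \<times> {..<M} \<times> {..<M} \<times> UNIV"

lemma JP_sub: "JP N1 N2 c x l \<subseteq> UJ (nstates N1 + nstates N2)"
  unfolding JP_def UJ_def by (auto dest: hs_lt split: if_splits)

lemma card_chr: "card (UNIV :: chr set) \<le> 16"
proof -
  have "card (UNIV :: chr set) \<le> card (UNIV :: (bool \<times> bool \<times> bool \<times> bool) set)"
    unfolding chr_UNIV by (rule card_image_le) simp
  also have "\<dots> = 16"
    by (simp add: UNIV_Times_UNIV[symmetric] card_cartesian_product card_UNIV_bool del: UNIV_Times_UNIV)
  finally show ?thesis .
qed

lemma finite_UJ: "finite (UJ M)"
  unfolding UJ_def using finite_chr by simp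

lemma card_UJ: "card (UJ M) \<le> 32 * M * M"
proof -
  have "card (UJ M) = 2 * (M * (M * card (UNIV :: chr set)))"
    unfolding UJ_def by (simp add: card_cartesian_product card_UNIV_bool)
  also have "\<dots> \<le> 2 * (M * (M * 16))" using card_chr by (intro mult_le_mono2) simp
  finally show ?thesis by simp
qed

lemma card_Pow_UJ: "card (Pow (UJ M)) \<le> 2 ^ (32 * M * M)"
  using card_UJ[of M] finite_UJ[of M] by (simp add: card_Pow power_increasing)

lemma shorten:
  fixes x :: "nat \<Rightarrow> nat"
  assumes "1 \<le> l" "\<forall>k<l. x k < m"
  shows "\<exists>x' l'. 1 \<le> l' \<and> l' \<le> 2 ^ (32 * (nstates N1 + nstates N2) * (nstates N1 + nstates N2))
           \<and> (\<forall>k<l'. x' k < m) \<and> JP N1 N2 c x' l' = JP N1 N2 c x l"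
  using assms
proof (induct l arbitrary: x rule: less_induct)
  case (less l)
  define M where "M = nstates N1 + nstates N2"
  define B where "B = (2::nat) ^ (32 * M * M)"
  show ?case
  proof (cases "l \<le> B")
    case True
    then show ?thesis using less.prems unfolding B_def M_def by blast
  next
    case False
    define F where "F i = JP N1 N2 c x i" for i
    have "F ` {1..l} \<subseteq> Pow (UJ M)" unfolding F_def M_def using JP_sub by blast
    then have "card (F ` {1..l}) \<le> card (Pow (UJ M))" using finite_UJ by (intro card_mono) auto
    also have "\<dots> \<le> B" unfolding B_def by (rule card_Pow_UJ)
    also have "B < card {1..l}" using False by simp
    finally have "\<not> inj_on F {1..l}" by (rule pigeonhole)
    then obtain i j where ij0: "i \<in> {1..l}" "j \<in> {1..l}" "i \<noteq> j" "F i = F j"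
      unfolding inj_on_def by blast
    obtain i j where ij: "1 \<le> i" "i < j" "j \<le> l" "F i = F j"
    proof (cases "i < j")
      case True then show ?thesis using that ij0 by auto
    next
      case False then show ?thesis using that[of j i] ij0 by auto
    qed
    define x' where "x' k = (if k < i then x k else x (k + (j - i)))" for k
    define l' where "l' = i + (l - j)"
    have hsA: "hs A c x' l' = hs A c x l" if hij: "hs A c x i = hs A c x j" for A
    proof -
      have "hs A c x' l' = pcomp (hs A c x' i) (hs A c (\<lambda>k. x' (i + k)) (l - j))"
        unfolding l'_def by (rule hs_comp)
      also have "hs A c x' i = hs A c x i" by (rule hs_cong) (simp add: x'_def)
      also have "(\<lambda>k. x' (i + k)) = (\<lambda>k. x (j + k))" using ij by (intro ext) (simp add: x'_def add.commute)
      also have "pcomp (hs A c x i) (hs A c (\<lambda>k. x (j + k)) (l - j)) = hs A c x (j + (l - j))"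
        using hij hs_comp[of A c x j "l - j"] by simp
      also have "j + (l - j) = l" using ij by simp
      finally show ?thesis .
    qed
    have J: "JP N1 N2 c x' l' = JP N1 N2 c x l"
      using ij(4) hsA unfolding F_def JP_eq by blast
    have "l' < l" "1 \<le> l'" using ij unfolding l'_def by auto
    moreover have "\<forall>k<l'. x' k < m" using less.prems ij unfolding x'_def l'_def by auto
    ultimately obtain x'' l'' where "1 \<le> l''" "l'' \<le> B" "\<forall>k<l''. x'' k < m"
      "JP N1 N2 c x'' l'' = JP N1 N2 c x' l'"
      using less.hyps unfolding B_def M_def by blast
    then show ?thesis using J unfolding B_def M_def by auto
  qed
qed


section \<open>Ramsey factorisation\<close>

lemma ramsey_blocks:
  fixes w :: "nat \<Rightarrow> nat"
  shows "\<exists>e::nat \<Rightarrow> nat. strict_mono e \<and> (\<forall>i j i' j'. i < j \<longrightarrow> i' < j' \<longrightarrow>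
           JP N1 N2 c (\<lambda>k. w (e i + k)) (e j - e i) = JP N1 N2 c (\<lambda>k. w (e i' + k)) (e j' - e i'))"
proof -
  define Pw where "Pw = Pow (UJ (nstates N1 + nstates N2))"
  have fPw: "finite Pw" unfolding Pw_def using finite_UJ by simp
  obtain h where h: "bij_betw h Pw {0..<card Pw}" using ex_bij_betw_finite_nat[OF fPw] by blast
  define G where "G i j = JP N1 N2 c (\<lambda>k. w (i + k)) (j - i)" for i j
  have GP: "G i j \<in> Pw" for i j unfolding G_def Pw_def using JP_sub by blast
  define f where "f X = h (G (Min X) (Max X))" for X
  have part: "\<forall>x\<in>(UNIV::nat set). \<forall>y\<in>UNIV. x \<noteq> y \<longrightarrow> f {x, y} < card Pw"
    using h GP unfolding f_def bij_betw_def by auto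
  obtain Y tc where Y: "infinite Y" "\<forall>x\<in>Y. \<forall>y\<in>Y. x \<noteq> y \<longrightarrow> f {x, y} = tc"
    using Ramsey2[OF infinite_UNIV_nat part] by blast
  define e where "e = enumerate Y"
  have sm: "strict_mono e" unfolding e_def strict_mono_def using Y(1) by (simp add: enumerate_mono)
  have eY: "e i \<in> Y" for i unfolding e_def using Y(1) by (rule enumerate_in_set)
  have col: "h (G (e i) (e j)) = tc" if "i < j" for i j
  proof -
    have "e i < e j" using sm that by (simp add: strict_mono_less)
    then have "Min {e i, e j} = e i" "Max {e i, e j} = e j" by auto
    then show ?thesis using Y(2) eY[of i] eY[of j] \<open>e i < e j\<close> unfolding f_def by force
  qed
  have "G (e i) (e j) = G (e i') (e j')" if "i < j" "i' < j'" for i j i' j'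
    using col[OF that(1)] col[OF that(2)] h GP unfolding bij_betw_def inj_on_def by metis
  then show ?thesis using sm unfolding G_def by blast
qed

theorem thr_equiv:
  assumes wf1: "wf_wba N1" and wf2: "wf_wba N2"
  defines "B \<equiv> 2 ^ (32 * (nstates N1 + nstates N2) * (nstates N1 + nstates N2))"
  shows "(\<forall>w. (\<forall>i. w i < m) \<longrightarrow> Lw K N1 c w \<longrightarrow> Lw K N2 c w) \<longleftrightarrow>
    (\<forall>u lu v lv. 1 \<le> lu \<longrightarrow> lu \<le> B \<longrightarrow> 1 \<le> lv \<longrightarrow> lv \<le> B \<longrightarrow> (\<forall>k<lu. u k < m) \<longrightarrow> (\<forall>k<lv. v k < m)
       \<longrightarrow> idem N1 c u lu v lv \<longrightarrow> idem N2 c u lu v lv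
       \<longrightarrow> acc K N1 (hs N1 c u lu) (hs N1 c v lv) \<longrightarrow> acc K N2 (hs N2 c u lu) (hs N2 c v lv))"
  (is "?L \<longleftrightarrow> ?R")
proof
  assume L: ?L
  show ?R
  proof (intro allI impI)
    fix u lu v lv
    assume h: "1 \<le> lu" "lu \<le> B" "1 \<le> lv" "lv \<le> B" "\<forall>k<lu. u k < m" "\<forall>k<lv. v k < m"
      "idem N1 c u lu v lv" "idem N2 c u lu v lv" "acc K N1 (hs N1 c u lu) (hs N1 c v lv)"
    have "\<forall>i. lassow u lu v lv i < m" using h(3,5,6) unfolding lassow_def by auto
    moreover have "Lw K N1 c (lassow u lu v lv)" using lasso_word[OF wf1 h(1,3,7)] h(9) by blast
    ultimately have "Lw K N2 c (lassow u lu v lv)" using L by blast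
    then show "acc K N2 (hs N2 c u lu) (hs N2 c v lv)" using lasso_word[OF wf2 h(1,3,8)] by blast
  qed
next
  assume R: ?R
  show ?L
  proof (intro allI impI)
    fix w :: "nat \<Rightarrow> nat"
    assume wm: "\<forall>i. w i < m" and L1: "Lw K N1 c w"
    obtain e :: "nat \<Rightarrow> nat" where sm: "strict_mono e" and eq: "\<forall>i j i' j'. i < j \<longrightarrow> i' < j' \<longrightarrow>
           JP N1 N2 c (\<lambda>k. w (e i + k)) (e j - e i) = JP N1 N2 c (\<lambda>k. w (e i' + k)) (e j' - e i')"
      using ramsey_blocks by blast
    have emono: "e i < e j" if "i < j" for i j using sm that by (simp add: strict_mono_less)
    define t where "t i = (if i = 0 then 0 else e i)" for i
    have tm: "strict_mono t" unfolding strict_mono_Suc_iff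
    proof
      fix n show "t n < t (Suc n)"
        using emono[of 0 "Suc n"] emono[of n "Suc n"] by (cases n) (auto simp: t_def)
    qed
    have t0: "t 0 = 0" by (simp add: t_def)
    define lu where "lu = e 1"
    define v where "v = (\<lambda>k. w (e 1 + k))"
    define lv where "lv = e 2 - e 1"
    have key: "Lw K A c w \<longleftrightarrow> acc K A (hs A c w lu) (hs A c v lv)" and idA: "idem A c w lu v lv"
      if wfA: "wf_wba A" and JPc: "\<And>i j i' j'. i < j \<Longrightarrow> i' < j' \<Longrightarrow>
           hs A c (\<lambda>k. w (e i + k)) (e j - e i) = hs A c (\<lambda>k. w (e i' + k)) (e j' - e i')" for A
    proof -
      have sh: "hs A c w (e j) = hs A c w lu" if "1 \<le> j" for j
      proof -
        have "hs A c w (e j) = hs A c w (e 0 + (e j - e 0))" using emono[of 0 j] that by simp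
        also have "\<dots> = pcomp (hs A c w (e 0)) (hs A c (\<lambda>k. w (e 0 + k)) (e j - e 0))" by (rule hs_comp)
        also have "hs A c (\<lambda>k. w (e 0 + k)) (e j - e 0) = hs A c (\<lambda>k. w (e 0 + k)) (e 1 - e 0)"
          using JPc[of 0 j 0 1] that by simp
        also have "pcomp (hs A c w (e 0)) \<dots> = hs A c w (e 0 + (e 1 - e 0))" by (rule hs_comp[symmetric])
        also have "e 0 + (e 1 - e 0) = lu" using emono[of 0 1] unfolding lu_def by simp
        finally show ?thesis .
      qed
      have S: "\<forall>j\<ge>1. hs A c w (t j) = hs A c w lu" using sh by (auto simp: t_def)
      have E: "\<forall>i j. 1 \<le> i \<longrightarrow> i < j \<longrightarrow> hs A c (\<lambda>k. w (t i + k)) (t j - t i) = hs A c v lv"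
      proof (intro allI impI)
        fix i j :: nat assume "1 \<le> i" "i < j"
        then have "t i = e i" "t j = e j" unfolding t_def by auto
        then show "hs A c (\<lambda>k. w (t i + k)) (t j - t i) = hs A c v lv"
          using JPc[of i j 1 2] \<open>i < j\<close> unfolding v_def lv_def by simp
      qed
      show "Lw K A c w \<longleftrightarrow> acc K A (hs A c w lu) (hs A c v lv)"
        by (rule lasso[OF wfA tm t0 S E])
      have i1: "hs A c (cat w lu v) (lu + lv) = hs A c w lu"
      proof -
        have "hs A c (cat w lu v) (lu + lv) = hs A c w (lu + lv)"
          by (rule hs_cong) (auto simp: cat_def v_def lu_def)
        moreover have "lu + lv = e 2" using emono[of 1 2] unfolding lu_def lv_def by simp
        ultimately show ?thesis using sh[of 2] by simp
      qed
      have i2: "hs A c v lv = pcomp (hs A c v lv) (hs A c v lv)"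
      proof -
        have "hs A c v lv = hs A c v (e 3 - e 1)" using JPc[of 1 2 1 3] unfolding v_def lv_def by simp
        also have "e 3 - e 1 = lv + (e 3 - e 2)" using emono[of 1 2] emono[of 2 3] unfolding lv_def by simp
        also have "hs A c v (lv + (e 3 - e 2)) = pcomp (hs A c v lv) (hs A c (\<lambda>k. v (lv + k)) (e 3 - e 2))"
          by (rule hs_comp)
        also have "(\<lambda>k. v (lv + k)) = (\<lambda>k. w (e 2 + k))" using emono[of 1 2] unfolding v_def lv_def by simp
        also have "hs A c (\<lambda>k. w (e 2 + k)) (e 3 - e 2) = hs A c v lv"
          using JPc[of 2 3 1 2] unfolding v_def lv_def by simp
        finally show ?thesis .
      qed
      show "idem A c w lu v lv" unfolding idem_iff using i1 i2 hs_cat[of A c w lu v lv] by simp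
    qed
    have JP1: "hs N1 c (\<lambda>k. w (e i + k)) (e j - e i) = hs N1 c (\<lambda>k. w (e i' + k)) (e j' - e i')"
      and JP2: "hs N2 c (\<lambda>k. w (e i + k)) (e j - e i) = hs N2 c (\<lambda>k. w (e i' + k)) (e j' - e i')"
      if "i < j" "i' < j'" for i j i' j'
    proof -
      have "JP N1 N2 c (\<lambda>k. w (e i + k)) (e j - e i) = JP N1 N2 c (\<lambda>k. w (e i' + k)) (e j' - e i')"
        using eq that by blast
      then show "hs N1 c (\<lambda>k. w (e i + k)) (e j - e i) = hs N1 c (\<lambda>k. w (e i' + k)) (e j' - e i')"
        "hs N2 c (\<lambda>k. w (e i + k)) (e j - e i) = hs N2 c (\<lambda>k. w (e i' + k)) (e j' - e i')"
        unfolding JP_eq by simp_all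
    qed
    note k1 = key[OF wf1 JP1] and id1 = idA[OF wf1 JP1]
    note k2 = key[OF wf2 JP2] and id2 = idA[OF wf2 JP2]
    have lu1: "1 \<le> lu" using emono[of 0 1] unfolding lu_def by simp
    have lv1: "1 \<le> lv" using emono[of 1 2] unfolding lv_def by simp
    obtain u' lu' where u': "1 \<le> lu'" "lu' \<le> B" "\<forall>k<lu'. u' k < m" "JP N1 N2 c u' lu' = JP N1 N2 c w lu"
      using shorten[OF lu1, of w m N1 N2 c] wm unfolding B_def by blast
    obtain v' lv' where v': "1 \<le> lv'" "lv' \<le> B" "\<forall>k<lv'. v' k < m" "JP N1 N2 c v' lv' = JP N1 N2 c v lv"
      using shorten[OF lv1, of v m N1 N2 c] wm unfolding B_def v_def by blast
    have hu: "hs N1 c u' lu' = hs N1 c w lu" "hs N2 c u' lu' = hs N2 c w lu" using u'(4) JP_eq by blast+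
    have hv: "hs N1 c v' lv' = hs N1 c v lv" "hs N2 c v' lv' = hs N2 c v lv" using v'(4) JP_eq by blast+
    have "idem N1 c u' lu' v' lv'" "idem N2 c u' lu' v' lv'"
      using id1 id2 hu hv unfolding idem_iff by simp_all
    moreover have "acc K N1 (hs N1 c u' lu') (hs N1 c v' lv')" using k1 L1 hu hv by simp
    ultimately have "acc K N2 (hs N2 c u' lu') (hs N2 c v' lv')" using R u' v' by blast
    then show "Lw K N2 c w" using k2 hu hv by simp
  qed
qed


section \<open>Behaviours and thresholds\<close>

lemma val_in:
  assumes fr: "finite (range d)"
  shows "omega_val K (\<lambda>j. to_ereal (d j)) \<in> insert \<infinity> (insert (- \<infinity>) (range (\<lambda>j. to_ereal (d j))))"
proof -
  define D where "D = (\<lambda>j. to_ereal (d j))"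
  have frD: "finite (D ` A)" for A unfolding D_def
    by (rule finite_subset[of _ "to_ereal ` range d"]) (use fr in auto)
  have supin: "(SUP x\<in>A. D x) \<in> range D" if "A \<noteq> {}" for A
    using sup_attained[OF frD that] by auto
  have infin: "(INF x\<in>A. D x) \<in> range D" if "A \<noteq> {}" for A
    using inf_attained[OF frD that] by auto
  have "omega_val K D \<in> insert \<infinity> (insert (- \<infinity>) (range D))"
  proof (cases "(\<exists>i. D i = - \<infinity>) \<or> (\<forall>i. D i = \<infinity>)")
    case True
    then show ?thesis by (cases K) (auto simp: liminf_val_def limsup_val_def supminf_val_def)
  next
    case False
    then have nm: "(\<exists>i. D i = - \<infinity>) = False" and na: "(\<forall>i. D i = \<infinity>) = False" by auto
    then have ne: "{i. D i \<noteq> \<infinity>} \<noteq> {}" by auto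
    show ?thesis
    proof (cases K)
      case K3
      then show ?thesis using supin[OF ne] by (simp add: supminf_val_def nm na)
    next
      case K1
      show ?thesis
      proof (cases "infinite {i. D i \<noteq> \<infinity>}")
        case True
        have ne2: "{k. k \<ge> i \<and> D k \<noteq> \<infinity>} \<noteq> {}" for i
          using True infinite_iff_unb[of "\<lambda>k. D k \<noteq> \<infinity>"] by auto
        define g where "g i = (INF k \<in> {k. k \<ge> i \<and> D k \<noteq> \<infinity>}. D k)" for i
        have gin: "range g \<subseteq> range D" using infin[OF ne2] unfolding g_def by auto
        then have "finite (range g)" using frD[of UNIV] finite_subset by blast
        then obtain i0 where "(SUP i. g i) = g i0" using sup_attained[of g UNIV] by auto
        then have "(SUP i. g i) \<in> range D" using gin by auto
        then show ?thesis using K1 True by (simp add: liminf_val_def nm na g_def)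
      next
        case False
        then show ?thesis using K1 infin[OF ne] by (simp add: liminf_val_def nm na)
      qed
    next
      case K2
      show ?thesis
      proof (cases "infinite {i. D i \<noteq> \<infinity>}")
        case True
        have ne2: "{k. k \<ge> i \<and> D k \<noteq> \<infinity>} \<noteq> {}" for i
          using True infinite_iff_unb[of "\<lambda>k. D k \<noteq> \<infinity>"] by auto
        define g where "g i = (SUP k \<in> {k. k \<ge> i \<and> D k \<noteq> \<infinity>}. D k)" for i
        have gin: "range g \<subseteq> range D" using supin[OF ne2] unfolding g_def by auto
        then have "finite (range g)" using frD[of UNIV] finite_subset by blast
        then obtain i0 where "(INF i. g i) = g i0" using inf_attained[of g UNIV] by auto
        then have "(INF i. g i) \<in> range D" using gin by auto
        then show ?thesis using K2 True by (simp add: limsup_val_def nm na g_def)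
      next
        case False
        then show ?thesis using K2 supin[OF ne] by (simp add: limsup_val_def nm na)
      qed
    qed
  qed
  then show ?thesis unfolding D_def .
qed

definition Wset :: "wba \<Rightarrow> nat \<Rightarrow> qbar set" where
  "Wset N m = {wt N q a p | q a p. q < nstates N \<and> a < m \<and> p < nstates N}"

lemma finite_Wset: "finite (Wset N m)"
proof -
  have "Wset N m = (\<lambda>(q, a, p). wt N q a p) ` ({..<nstates N} \<times> {..<m} \<times> {..<nstates N})"
    unfolding Wset_def by force
  then show ?thesis by simp
qed

lemma wseq_range: "successful_run N \<rho> \<Longrightarrow> \<forall>i. w i < m \<Longrightarrow> range (wseq N w \<rho>) \<subseteq> Wset N m"
proof
  fix y assume s: "successful_run N \<rho>" and wm: "\<forall>i. w i < m" and "y \<in> range (wseq N w \<rho>)"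
  then obtain j where y: "y = wt N (\<rho> j) (w j) (\<rho> (Suc j))" unfolding wseq_def by auto
  have "\<rho> j < nstates N" "w j < m" "\<rho> (Suc j) < nstates N" using s wm unfolding successful_run_def by auto
  then show "y \<in> Wset N m" unfolding Wset_def y by blast
qed

lemma run_weight_in:
  assumes "successful_run N \<rho>" "\<forall>i. w i < m"
  shows "run_weight K N w \<rho> \<in> insert \<infinity> (insert (- \<infinity>) (to_ereal ` Wset N m))"
proof -
  have r: "range (wseq N w \<rho>) \<subseteq> Wset N m" by (rule wseq_range[OF assms])
  then have "finite (range (wseq N w \<rho>))" using finite_Wset finite_subset by blast
  from val_in[OF this, of K] r show ?thesis
    unfolding run_weight_def wseq_def by auto
qed

definition Vset :: "wba \<Rightarrow> nat \<Rightarrow> ereal set" where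
  "Vset N m = insert \<infinity> (insert (- \<infinity>) (to_ereal ` Wset N m))"

lemma finite_Vset: "finite (Vset N m)"
  unfolding Vset_def using finite_Wset by simp

lemma beh_ge:
  assumes wm: "\<forall>i. w i < m" and c: "c \<noteq> - \<infinity>"
  shows "c \<le> behavior K N w \<longleftrightarrow> Lw K N c w"
proof -
  have fin: "finite ((\<lambda>\<rho>. run_weight K N w \<rho>) ` {\<rho>. successful_run N \<rho>})"
    by (rule finite_subset[OF _ finite_Vset[of N m]]) (use run_weight_in[OF _ wm] in \<open>auto simp: Vset_def\<close>)
  have "c \<le> behavior K N w \<longleftrightarrow> (\<exists>\<rho>\<in>{\<rho>. successful_run N \<rho>}. c \<le> run_weight K N w \<rho>)"
    unfolding behavior_def by (rule le_sup_finite_iff[OF fin c])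
  also have "\<dots> \<longleftrightarrow> Lw K N c w"
  proof -
    have "c \<le> run_weight K N w \<rho> \<longleftrightarrow> good K c (wseq N w \<rho>)" if "successful_run N \<rho>" for \<rho>
    proof -
      have "finite (range (wseq N w \<rho>))"
        using wseq_range[OF that wm] finite_Wset finite_subset by blast
      from val_good[OF this c, of K] show ?thesis unfolding run_weight_def wseq_def .
    qed
    then show ?thesis unfolding Lw_def by auto
  qed
  finally show ?thesis .
qed

lemma beh_in:
  assumes wm: "\<forall>i. w i < m"
  shows "behavior K N w \<in> Vset N m"
proof (cases "{\<rho>. successful_run N \<rho>} = {}")
  case True
  have "behavior K N w = - \<infinity>" unfolding behavior_def True by (simp add: bot_ereal_def)
  then show ?thesis unfolding Vset_def by simp
next
  case False
  have fin: "finite ((\<lambda>\<rho>. run_weight K N w \<rho>) ` {\<rho>. successful_run N \<rho>})"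
    by (rule finite_subset[OF _ finite_Vset[of N m]]) (use run_weight_in[OF _ wm] in \<open>auto simp: Vset_def\<close>)
  obtain \<rho> where "successful_run N \<rho>" "behavior K N w = run_weight K N w \<rho>"
    using sup_attained[OF fin False] unfolding behavior_def by auto
  then show ?thesis using run_weight_in[OF _ wm] unfolding Vset_def by auto
qed

theorem incl_thr:
  "(\<forall>w. (\<forall>i. w i < m) \<longrightarrow> behavior K N w \<le> behavior K N' w) \<longleftrightarrow>
   (\<forall>c\<in>insert \<infinity> (to_ereal ` Wset N m). c \<noteq> - \<infinity> \<longrightarrow> (\<forall>w. (\<forall>i. w i < m) \<longrightarrow> Lw K N c w \<longrightarrow> Lw K N' c w))"
proof
  assume H: "\<forall>w. (\<forall>i. w i < m) \<longrightarrow> behavior K N w \<le> behavior K N' w"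
  show "\<forall>c\<in>insert \<infinity> (to_ereal ` Wset N m). c \<noteq> - \<infinity> \<longrightarrow> (\<forall>w. (\<forall>i. w i < m) \<longrightarrow> Lw K N c w \<longrightarrow> Lw K N' c w)"
  proof (intro ballI impI allI)
    fix c w assume c: "c \<noteq> - \<infinity>" and wm: "\<forall>i. w i < (m::nat)" and L: "Lw K N c w"
    have "c \<le> behavior K N w" using beh_ge[OF wm c] L by simp
    also have "\<dots> \<le> behavior K N' w" using H wm by blast
    finally show "Lw K N' c w" using beh_ge[OF wm c] by simp
  qed
next
  assume H: "\<forall>c\<in>insert \<infinity> (to_ereal ` Wset N m). c \<noteq> - \<infinity> \<longrightarrow> (\<forall>w. (\<forall>i. w i < m) \<longrightarrow> Lw K N c w \<longrightarrow> Lw K N' c w)"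
  show "\<forall>w. (\<forall>i. w i < m) \<longrightarrow> behavior K N w \<le> behavior K N' w"
  proof (intro allI impI)
    fix w :: "nat \<Rightarrow> nat" assume wm: "\<forall>i. w i < m"
    define b where "b = behavior K N w"
    show "behavior K N w \<le> behavior K N' w"
    proof (cases "b = - \<infinity>")
      case True then show ?thesis unfolding b_def by simp
    next
      case False
      have "b \<in> insert \<infinity> (to_ereal ` Wset N m)" using beh_in[OF wm, of K N] False unfolding b_def Vset_def by auto
      moreover have "Lw K N b w" using beh_ge[OF wm False, of K N] unfolding b_def by simp
      ultimately have "Lw K N' b w" using H wm False by blast
      then show ?thesis using beh_ge[OF wm False, of K N'] unfolding b_def by simp
    qed
  qed
qed



section \<open>The decision procedure on codes\<close>

lemma rfn_compL: "rfn j g \<Longrightarrow> length fs = j \<Longrightarrow> (\<forall>h\<in>set fs. rfn k h) \<Longrightarrow> rfn k (\<lambda>e. g (\<lambda>i. (fs ! i) e))"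
proof -
  assume g: "rfn j g" and l: "length fs = j" and h: "\<forall>h\<in>set fs. rfn k h"
  have "\<forall>i<j. rfn k (fs ! i)"
  proof (intro allI impI)
    fix i assume "i < j"
    then have "fs ! i \<in> set fs" using l by (intro nth_mem) simp
    then show "rfn k (fs ! i)" using h by blast
  qed
  from rfn_comp[OF g this] show ?thesis .
qed

lemma rpred_compL: "rpred j g \<Longrightarrow> length fs = j \<Longrightarrow> (\<forall>h\<in>set fs. rfn k h) \<Longrightarrow> rpred k (\<lambda>e. g (\<lambda>i. (fs ! i) e))"
  unfolding rpred_def by (drule rfn_compL[of j _ fs k]) auto

definition dig :: "nat \<Rightarrow> nat \<Rightarrow> nat \<Rightarrow> nat" where
  "dig b r k = r div b ^ k mod b"

lemma rfn_dig: "rfn k a \<Longrightarrow> rfn k b \<Longrightarrow> rfn k c \<Longrightarrow> rfn k (\<lambda>e. dig (a e) (b e) (c e))"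
  unfolding dig_def by (intro rfn_intros)

definition wcode :: "nat \<Rightarrow> nat \<Rightarrow> nat \<Rightarrow> nat \<Rightarrow> nat \<Rightarrow> nat" where
  "wcode m a q s p = lnth (lnth a 1) ((q * m + s) * lnth a 0 + p)"

lemma rfn_wcode: "rfn k a \<Longrightarrow> rfn k q \<Longrightarrow> rfn k s \<Longrightarrow> rfn k p \<Longrightarrow> rfn k (\<lambda>e. wcode m (a e) (q e) (s e) (p e))"
  unfolding wcode_def by (intro rfn_intros rfn_lnth)

definition ipos :: "nat \<Rightarrow> nat" where "ipos y = (if y mod 2 = 0 then y div 2 else 0)"
definition ineg :: "nat \<Rightarrow> nat" where "ineg y = (if y mod 2 = 0 then 0 else y div 2 + 1)"

lemma rfn_ipos: "rfn k a \<Longrightarrow> rfn k (\<lambda>e. ipos (a e))"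
  unfolding ipos_def by (intro rfn_intros)
lemma rfn_ineg: "rfn k a \<Longrightarrow> rfn k (\<lambda>e. ineg (a e))"
  unfolding ineg_def by (intro rfn_intros)

definition geC :: "nat \<Rightarrow> nat \<Rightarrow> bool" where
  "geC y cc \<longleftrightarrow> cc \<noteq> 1 \<and>
     ipos (pfst (cc - 2)) * (psnd (y - 2) div 2) + ineg (pfst (y - 2)) * (psnd (cc - 2) div 2)
     \<le> ipos (pfst (y - 2)) * (psnd (cc - 2) div 2) + ineg (pfst (cc - 2)) * (psnd (y - 2) div 2)"

lemma rpred_geC: "rfn k a \<Longrightarrow> rfn k b \<Longrightarrow> rpred k (\<lambda>e. geC (a e) (b e))"
  unfolding geC_def by (intro rfn_intros rfn_ipos rfn_ineg rfn_pfst rfn_psnd)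

definition segC :: "nat \<Rightarrow> nat \<Rightarrow> nat \<Rightarrow> nat \<Rightarrow> nat \<Rightarrow> nat \<Rightarrow> nat" where
  "segC m a cc x l r =
     (if \<exists>k<l. lmem (lnth a 3) (dig (lnth a 0) r (Suc k)) then 1 else 0)
   + (if \<exists>k<l. wcode m a (dig (lnth a 0) r k) (dig m x k) (dig (lnth a 0) r (Suc k)) = 0 then 2 else 0)
   + (if \<exists>k<l. 2 \<le> wcode m a (dig (lnth a 0) r k) (dig m x k) (dig (lnth a 0) r (Suc k))
          \<and> \<not> geC (wcode m a (dig (lnth a 0) r k) (dig m x k) (dig (lnth a 0) r (Suc k))) cc then 4 else 0)
   + (if \<exists>k<l. 2 \<le> wcode m a (dig (lnth a 0) r k) (dig m x k) (dig (lnth a 0) r (Suc k))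
          \<and> geC (wcode m a (dig (lnth a 0) r k) (dig m x k) (dig (lnth a 0) r (Suc k))) cc then 8 else 0)"

lemma rfn_segC0: "rfn 5 (\<lambda>e. segC m (e 0) (e 1) (e 2) (e 3) (e 4))"
  unfolding segC_def by (intro rfn_intros rfn_lnth rpred_lmem rfn_dig rfn_wcode rpred_geC; simp)


lemma rfn_segC: "rfn k a \<Longrightarrow> rfn k b \<Longrightarrow> rfn k c \<Longrightarrow> rfn k d \<Longrightarrow> rfn k f \<Longrightarrow>
    rfn k (\<lambda>e. segC m (a e) (b e) (c e) (d e) (f e))"
  using rfn_compL[OF rfn_segC0, of "[a, b, c, d, f]" k] by (simp add: numeral_eq_Suc)

definition HSc :: "nat \<Rightarrow> nat \<Rightarrow> nat \<Rightarrow> nat \<Rightarrow> nat \<Rightarrow> nat \<Rightarrow> nat \<Rightarrow> nat \<Rightarrow> bool" where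
  "HSc m a cc x l p q ch \<longleftrightarrow> (\<exists>r<lnth a 0 ^ Suc l. dig (lnth a 0) r 0 = p \<and> dig (lnth a 0) r l = q \<and> segC m a cc x l r = ch)"

lemma rpred_HSc0: "rpred 7 (\<lambda>e. HSc m (e 0) (e 1) (e 2) (e 3) (e 4) (e 5) (e 6))"
  unfolding HSc_def by (intro rfn_intros rfn_lnth rfn_dig rfn_segC; simp)

lemma rpred_HSc: "rfn k a \<Longrightarrow> rfn k b \<Longrightarrow> rfn k c \<Longrightarrow> rfn k d \<Longrightarrow> rfn k f \<Longrightarrow> rfn k g \<Longrightarrow> rfn k h \<Longrightarrow>
    rpred k (\<lambda>e. HSc m (a e) (b e) (c e) (d e) (f e) (g e) (h e))"
  using rpred_compL[OF rpred_HSc0, of "[a, b, c, d, f, g, h]" k] by (simp add: numeral_eq_Suc)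

definition PEC :: "nat \<Rightarrow> nat \<Rightarrow> nat \<Rightarrow> nat \<Rightarrow> nat \<Rightarrow> nat \<Rightarrow> nat \<Rightarrow> bool" where
  "PEC m a cc x lx y ly \<longleftrightarrow> (\<forall>p<lnth a 0. \<forall>q<lnth a 0. \<forall>ch<16. HSc m a cc x lx p q ch \<longleftrightarrow> HSc m a cc y ly p q ch)"

lemma rpred_PEC0: "rpred 6 (\<lambda>e. PEC m (e 0) (e 1) (e 2) (e 3) (e 4) (e 5))"
  unfolding PEC_def by (intro rfn_intros rfn_lnth rpred_HSc; simp)

lemma rpred_PEC: "rfn k a \<Longrightarrow> rfn k b \<Longrightarrow> rfn k c \<Longrightarrow> rfn k d \<Longrightarrow> rfn k f \<Longrightarrow> rfn k g \<Longrightarrow>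
    rpred k (\<lambda>e. PEC m (a e) (b e) (c e) (d e) (f e) (g e))"
  using rpred_compL[OF rpred_PEC0, of "[a, b, c, d, f, g]" k] by (simp add: numeral_eq_Suc)

definition idemC :: "nat \<Rightarrow> nat \<Rightarrow> nat \<Rightarrow> nat \<Rightarrow> nat \<Rightarrow> nat \<Rightarrow> nat \<Rightarrow> bool" where
  "idemC m a cc u lu v lv \<longleftrightarrow> PEC m a cc (u + m ^ lu * v) (lu + lv) u lu \<and> PEC m a cc (v + m ^ lv * v) (lv + lv) v lv"

lemma rpred_idemC0: "rpred 6 (\<lambda>e. idemC m (e 0) (e 1) (e 2) (e 3) (e 4) (e 5))"
  unfolding idemC_def by (intro rfn_intros rpred_PEC; simp)

lemma rpred_idemC: "rfn k a \<Longrightarrow> rfn k b \<Longrightarrow> rfn k c \<Longrightarrow> rfn k d \<Longrightarrow> rfn k f \<Longrightarrow> rfn k g \<Longrightarrow>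
    rpred k (\<lambda>e. idemC m (a e) (b e) (c e) (d e) (f e) (g e))"
  using rpred_compL[OF rpred_idemC0, of "[a, b, c, d, f, g]" k] by (simp add: numeral_eq_Suc)

definition chr_of_nat :: "nat \<Rightarrow> chr" where
  "chr_of_nat n = Chr (n mod 2 = 1) (n div 2 mod 2 = 1) (n div 4 mod 2 = 1) (n div 8 mod 2 = 1)"

definition kcondC :: "valuation_kind \<Rightarrow> nat \<Rightarrow> nat \<Rightarrow> bool" where
  "kcondC K na nb \<longleftrightarrow> kcond K (chr_of_nat na) (chr_of_nat nb)"

lemma rpred_kcondC: "rfn k a \<Longrightarrow> rfn k b \<Longrightarrow> rpred k (\<lambda>e. kcondC K (a e) (b e))"
  by (cases K; simp add: kcondC_def chr_of_nat_def; intro rfn_intros)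

definition AccC :: "valuation_kind \<Rightarrow> nat \<Rightarrow> nat \<Rightarrow> nat \<Rightarrow> nat \<Rightarrow> nat \<Rightarrow> nat \<Rightarrow> nat \<Rightarrow> bool" where
  "AccC K m a cc u lu v lv \<longleftrightarrow> (\<exists>p<lnth a 0. lmem (lnth a 2) p \<and> (\<exists>q<lnth a 0. \<exists>na<16. \<exists>nb<16.
      HSc m a cc u lu p q na \<and> HSc m a cc v lv q q nb \<and> nb mod 2 = 1 \<and> na div 2 mod 2 = 0 \<and> nb div 2 mod 2 = 0
      \<and> kcondC K na nb))"

lemma rpred_AccC0: "rpred 6 (\<lambda>e. AccC K m (e 0) (e 1) (e 2) (e 3) (e 4) (e 5))"
  unfolding AccC_def by (intro rfn_intros rfn_lnth rpred_lmem rpred_HSc rpred_kcondC; simp)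

lemma rpred_AccC: "rfn k a \<Longrightarrow> rfn k b \<Longrightarrow> rfn k c \<Longrightarrow> rfn k d \<Longrightarrow> rfn k f \<Longrightarrow> rfn k g \<Longrightarrow>
    rpred k (\<lambda>e. AccC K m (a e) (b e) (c e) (d e) (f e) (g e))"
  using rpred_compL[OF rpred_AccC0, of "[a, b, c, d, f, g]" k] by (simp add: numeral_eq_Suc)

definition thrC :: "nat \<Rightarrow> nat \<Rightarrow> nat \<Rightarrow> nat" where
  "thrC m a idx = (if idx < lnth a 0 * m * lnth a 0 then lnth (lnth a 1) idx else 1)"

lemma rfn_thrC: "rfn k a \<Longrightarrow> rfn k b \<Longrightarrow> rfn k (\<lambda>e. thrC m (a e) (b e))"
  unfolding thrC_def by (intro rfn_intros rfn_lnth)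

definition Phi :: "valuation_kind \<Rightarrow> nat \<Rightarrow> nat \<Rightarrow> bool" where
  "Phi K m x \<longleftrightarrow> (\<forall>idx < lnth (pfst x) 0 * m * lnth (pfst x) 0 + 1. thrC m (pfst x) idx \<noteq> 0 \<longrightarrow>
     (\<forall>lu < 2 ^ (32 * (lnth (pfst x) 0 + lnth (psnd x) 0) * (lnth (pfst x) 0 + lnth (psnd x) 0)) + 1.
      \<forall>u < m ^ lu.
      \<forall>lv < 2 ^ (32 * (lnth (pfst x) 0 + lnth (psnd x) 0) * (lnth (pfst x) 0 + lnth (psnd x) 0)) + 1.
      \<forall>v < m ^ lv.
       1 \<le> lu \<longrightarrow> 1 \<le> lv \<longrightarrow> idemC m (pfst x) (thrC m (pfst x) idx) u lu v lv
       \<longrightarrow> idemC m (psnd x) (thrC m (pfst x) idx) u lu v lv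
       \<longrightarrow> AccC K m (pfst x) (thrC m (pfst x) idx) u lu v lv \<longrightarrow> AccC K m (psnd x) (thrC m (pfst x) idx) u lu v lv))"

lemma rpred_Phi: "rpred 1 (\<lambda>e. Phi K m (e 0))"
  unfolding Phi_def by (intro rfn_intros rfn_lnth rfn_pfst rfn_psnd rfn_thrC rpred_idemC rpred_AccC; simp)

lemma Phi_computable: "\<exists>f. \<forall>x. eval_recf f [x] (if Phi K m x then 1 else 0)"
proof -
  obtain f where "\<forall>e. eval_recf f (map e [0..<1]) (if Phi K m (e 0) then 1 else 0)"
    using rpred_Phi[of K m] unfolding rpred_def rfn_def by blast
  then have "eval_recf f [x] (if Phi K m x then 1 else 0)" for x
    by (drule_tac x = "\<lambda>_. x" in spec) simp
  then show ?thesis by blast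
qed



lemma dig_lt: "0 < b \<Longrightarrow> dig b r k < b"
  unfolding dig_def by simp

lemma dig_cons0: "0 < b \<Longrightarrow> a < b \<Longrightarrow> dig b (a + b * r) 0 = a"
  unfolding dig_def by simp

lemma dig_consS: "0 < b \<Longrightarrow> a < b \<Longrightarrow> dig b (a + b * r) (Suc k) = dig b r k"
proof -
  assume b: "0 < b" and a: "a < b"
  have "(a + b * r) div b ^ Suc k = (a + b * r) div b div b ^ k" by (simp add: div_mult2_eq)
  also have "(a + b * r) div b = r" using a b by simp
  finally show ?thesis unfolding dig_def by simp
qed

lemma ex_code: "0 < b \<Longrightarrow> \<forall>k<L. f k < b \<Longrightarrow> \<exists>r<b ^ L. \<forall>k<L. dig b r k = f k"
proof (induct L arbitrary: f)
  case 0
  then show ?case by (intro exI[of _ 0]) simp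
next
  case (Suc L)
  have "\<forall>k<L. f (Suc k) < b" using Suc.prems by simp
  from Suc.hyps[OF Suc.prems(1) this] obtain r' where r': "r' < b ^ L" "\<forall>k<L. dig b r' k = f (Suc k)"
    by blast
  have f0: "f 0 < b" using Suc by simp
  have "f 0 + b * r' < b ^ Suc L"
  proof -
    have "r' + 1 \<le> b ^ L" using r' by simp
    then have "b * (r' + 1) \<le> b * b ^ L" by (rule mult_le_mono2)
    then show ?thesis using f0 by (simp add: algebra_simps)
  qed
  moreover have "\<forall>k<Suc L. dig b (f 0 + b * r') k = f k"
  proof (intro allI impI)
    fix k assume "k < Suc L"
    then show "dig b (f 0 + b * r') k = f k"
      using Suc.prems f0 r'(2) by (cases k) (auto simp: dig_cons0 dig_consS)
  qed
  ultimately show ?case by blast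
qed

lemma dig_cat: "0 < b \<Longrightarrow> x < b ^ lx \<Longrightarrow> dig b (x + b ^ lx * y) k = (if k < lx then dig b x k else dig b y (k - lx))"
proof (induct lx arbitrary: x k)
  case 0
  then show ?case by simp
next
  case (Suc lx)
  define x0 where "x0 = x mod b"
  define x' where "x' = x div b"
  have x: "x = x0 + b * x'" unfolding x0_def x'_def by simp
  have x0: "x0 < b" unfolding x0_def using Suc by simp
  have x': "x' < b ^ lx" using Suc.prems unfolding x'_def by (simp add: div_less_iff_less_mult mult.commute)
  have e: "x + b ^ Suc lx * y = x0 + b * (x' + b ^ lx * y)" unfolding x by (simp add: algebra_simps)
  show ?case
  proof (cases k)
    case 0
    then show ?thesis using Suc.prems x0 unfolding e by (subst x) (simp add: dig_cons0)
  next
    case (Suc k')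
    have "dig b (x + b ^ Suc lx * y) k = dig b (x' + b ^ lx * y) k'"
      unfolding e Suc using Suc.prems(1) x0 by (simp add: dig_consS)
    also have "\<dots> = (if k' < lx then dig b x' k' else dig b y (k' - lx))" using Suc.hyps[OF Suc.prems(1) x'] .
    also have "dig b x' k' = dig b x k" unfolding Suc using Suc.prems(1) x0 by (subst x) (simp add: dig_consS)
    finally show ?thesis unfolding Suc by simp
  qed
qed

lemma dig_cat_fun: "0 < b \<Longrightarrow> x < b ^ lx \<Longrightarrow> dig b (x + b ^ lx * y) = cat (dig b x) lx (dig b y)"
  by (rule ext) (simp add: dig_cat cat_def)

section \<open>Decoding automata\<close>

definition WL :: "nat \<Rightarrow> wba \<Rightarrow> nat list" where
  "WL m N = [enc_qbar (wt N q a p). q \<leftarrow> [0..<nstates N], a \<leftarrow> [0..<m], p \<leftarrow> [0..<nstates N]]"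

lemma dec_wba:
  "lnth (enc_wba m N) 0 = nstates N"
  "lnth (enc_wba m N) 1 = list_encode (WL m N)"
  "lnth (enc_wba m N) 2 = list_encode (filter (\<lambda>q. q \<in> init N) [0..<nstates N])"
  "lnth (enc_wba m N) 3 = list_encode (filter (\<lambda>q. q \<in> fin N) [0..<nstates N])"
  unfolding enc_wba_def WL_def by (subst lnth_enc; simp del: list_encode.simps)+

lemma nth_concat_uniform:
  "(\<forall>i<k. length (g i) = b) \<Longrightarrow> i < k \<Longrightarrow> j < b \<Longrightarrow> concat (map g [0..<k]) ! (i * b + j) = g i ! j"
proof (induct k)
  case 0
  then show ?case by simp
next
  case (Suc k)
  have len: "length (concat (map g [0..<k])) = k * b"
    using Suc.prems(1) by (induct k) auto
  show ?case
  proof (cases "i < k")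
    case True
    have "i * b + j < k * b"
    proof -
      have "i * b + j < i * b + b" using Suc.prems by simp
      also have "\<dots> = Suc i * b" by simp
      also have "\<dots> \<le> k * b" using True by (intro mult_le_mono1) simp
      finally show ?thesis .
    qed
    then show ?thesis using Suc True len by (simp add: nth_append)
  next
    case False
    then have "i = k" using Suc.prems by simp
    then show ?thesis using len by (simp add: nth_append)
  qed
qed

lemma length_concat_uniform: "(\<forall>i<k. length (g i) = b) \<Longrightarrow> length (concat (map g [0..<k])) = k * b"
  by (induct k) auto

lemma WL_nth:
  assumes "q < nstates N" "a < m" "p < nstates N"
  shows "WL m N ! ((q * m + a) * nstates N + p) = enc_qbar (wt N q a p)"
proof -
  define n where "n = nstates N"
  have inner: "concat (map (\<lambda>a. map (\<lambda>p. enc_qbar (wt N q a p)) [0..<n]) [0..<m]) ! (a * n + p) = enc_qbar (wt N q a p)"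
    if "q < n" "a < m" "p < n" for q a p
    using nth_concat_uniform[of m "\<lambda>a. map (\<lambda>p. enc_qbar (wt N q a p)) [0..<n]" n a p] that by simp
  have "WL m N = concat (map (\<lambda>q. concat (map (\<lambda>a. map (\<lambda>p. enc_qbar (wt N q a p)) [0..<n]) [0..<m])) [0..<n])"
    unfolding WL_def n_def by (simp add: map_concat)
  also have "\<dots> ! (q * (m * n) + (a * n + p)) = concat (map (\<lambda>a. map (\<lambda>p. enc_qbar (wt N q a p)) [0..<n]) [0..<m]) ! (a * n + p)"
  proof (rule nth_concat_uniform)
    show "\<forall>i<n. length (concat (map (\<lambda>a. map (\<lambda>p. enc_qbar (wt N i a p)) [0..<n]) [0..<m])) = m * n"
      by (simp add: length_concat_uniform)
    show "q < n" using assms n_def by simp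
    have "a * n + p < a * n + n" using assms n_def by simp
    also have "\<dots> = Suc a * n" by simp
    also have "\<dots> \<le> m * n" using assms by (intro mult_le_mono1) simp
    finally show "a * n + p < m * n" .
  qed
  also have "\<dots> = enc_qbar (wt N q a p)" using inner assms n_def by simp
  finally show ?thesis unfolding n_def by (simp add: algebra_simps)
qed

lemma length_WL: "length (WL m N) = nstates N * m * nstates N"
proof -
  have "WL m N = concat (map (\<lambda>q. concat (map (\<lambda>a. map (\<lambda>p. enc_qbar (wt N q a p)) [0..<nstates N]) [0..<m])) [0..<nstates N])"
    unfolding WL_def by (simp add: map_concat)
  moreover have "\<forall>q<nstates N. length (concat (map (\<lambda>a. map (\<lambda>p. enc_qbar (wt N q a p)) [0..<nstates N]) [0..<m])) = m * nstates N"
    by (simp add: length_concat_uniform)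
  ultimately show ?thesis
    using length_concat_uniform[of "nstates N" "\<lambda>q. concat (map (\<lambda>a. map (\<lambda>p. enc_qbar (wt N q a p)) [0..<nstates N]) [0..<m])" "m * nstates N"]
    by (simp add: mult.assoc)
qed

lemma set_WL: "y \<in> set (WL m N) \<longleftrightarrow> (\<exists>q a p. q < nstates N \<and> a < m \<and> p < nstates N \<and> y = enc_qbar (wt N q a p))"
  unfolding WL_def by force

lemma wcode_enc:
  assumes "q < nstates N" "a < m" "p < nstates N"
  shows "wcode m (enc_wba m N) q a p = enc_qbar (wt N q a p)"
proof -
  have "(q * m + a) * nstates N + p < length (WL m N)"
  proof -
    have "(q * m + a) * nstates N + p < (q * m + a) * nstates N + nstates N" using assms by simp
    also have "\<dots> = Suc (q * m + a) * nstates N" by simp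
    also have "\<dots> \<le> (q * m + m) * nstates N" using assms by (intro mult_le_mono1) simp
    also have "\<dots> = Suc q * m * nstates N" by simp
    also have "\<dots> \<le> nstates N * m * nstates N" using assms by (intro mult_le_mono1) simp
    finally show ?thesis by (simp add: length_WL)
  qed
  then show ?thesis unfolding wcode_def dec_wba using WL_nth[OF assms] by (simp add: lnth_enc)
qed

lemma lmem_init: "wf_wba N \<Longrightarrow> lmem (lnth (enc_wba m N) 2) q \<longleftrightarrow> q \<in> init N"
  unfolding dec_wba lmem_enc wf_wba_def by auto

lemma lmem_fin: "wf_wba N \<Longrightarrow> lmem (lnth (enc_wba m N) 3) q \<longleftrightarrow> q \<in> fin N"
  unfolding dec_wba lmem_enc wf_wba_def by auto


section \<open>Comparison of rational codes\<close>

lemma int_encode_pos_neg: "int (ipos (int_encode z)) - int (ineg (int_encode z)) = z"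
proof (cases "0 \<le> z")
  case True
  then show ?thesis by (simp add: int_encode_def sum_encode_def ipos_def ineg_def)
next
  case False
  then have "int_encode z = Suc (2 * nat (- z - 1))" by (simp add: int_encode_def sum_encode_def)
  then show ?thesis using False by (simp add: ipos_def ineg_def)
qed

lemma int_encode_pos_div2: "0 < d \<Longrightarrow> int_encode d div 2 = nat d"
  by (simp add: int_encode_def sum_encode_def)

lemma enc_qbar_0_iff: "enc_qbar v = 0 \<longleftrightarrow> v = MInf"
  by (cases v) auto

lemma enc_qbar_ge2_iff: "2 \<le> enc_qbar v \<longleftrightarrow> (\<exists>r. v = Fin r)"
  by (cases v) auto

lemma geC_Fin:
  assumes cq: "cq \<noteq> MInf"
  shows "geC (enc_qbar (Fin r)) (enc_qbar cq) \<longleftrightarrow> to_ereal cq \<le> ereal (of_rat r)"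
proof (cases cq)
  case PInf
  then show ?thesis by (simp add: geC_def)
next
  case MInf
  then show ?thesis using cq by simp
next
  case (Fin s)
  obtain n1 d1 where q1: "quotient_of r = (n1, d1)" by (cases "quotient_of r")
  obtain n2 d2 where q2: "quotient_of s = (n2, d2)" by (cases "quotient_of s")
  have d1: "0 < d1" using quotient_of_denom_pos[OF q1] .
  have d2: "0 < d2" using quotient_of_denom_pos[OF q2] .
  define p1 where "p1 = ipos (int_encode n1)"
  define g1 where "g1 = ineg (int_encode n1)"
  define p2 where "p2 = ipos (int_encode n2)"
  define g2 where "g2 = ineg (int_encode n2)"
  have n1: "n1 = int p1 - int g1" and n2: "n2 = int p2 - int g2"
    using int_encode_pos_neg unfolding p1_def g1_def p2_def g2_def by metis+
  have "geC (enc_qbar (Fin r)) (enc_qbar cq) \<longleftrightarrow> p2 * nat d1 + g1 * nat d2 \<le> p1 * nat d2 + g2 * nat d1"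
    unfolding geC_def Fin using q1 q2 d1 d2
    by (simp add: int_encode_pos_div2 p1_def g1_def p2_def g2_def)
  also have "\<dots> \<longleftrightarrow> int p2 * d1 + int g1 * d2 \<le> int p1 * d2 + int g2 * d1"
  proof -
    have h1: "int (p2 * nat d1 + g1 * nat d2) = int p2 * d1 + int g1 * d2" using d1 d2 by simp
    have h2: "int (p1 * nat d2 + g2 * nat d1) = int p1 * d2 + int g2 * d1" using d1 d2 by simp
    show ?thesis by (metis zle_int h1 h2)
  qed
  also have "\<dots> \<longleftrightarrow> n2 * d1 \<le> n1 * d2" unfolding n1 n2 by (simp add: algebra_simps)
  also have "\<dots> \<longleftrightarrow> s \<le> r" using rat_less_eq_code[of s r] q1 q2 by (simp add: mult.commute)
  also have "\<dots> \<longleftrightarrow> to_ereal cq \<le> ereal (of_rat r)" using Fin by (simp add: of_rat_less_eq)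
  finally show ?thesis .
qed

lemma lo_iff:
  assumes cq: "cq \<noteq> MInf"
  shows "(2 \<le> enc_qbar v \<and> \<not> geC (enc_qbar v) (enc_qbar cq)) \<longleftrightarrow> isLo (to_ereal cq) v"
proof (cases v)
  case (Fin r)
  have e: "(2 \<le> enc_qbar (Fin r) \<and> \<not> geC (enc_qbar (Fin r)) (enc_qbar cq)) \<longleftrightarrow> \<not> (to_ereal cq \<le> ereal (of_rat r))"
    using geC_Fin[OF cq, of r] by simp
  then show ?thesis using Fin by (simp add: isLo_def not_le)
qed (auto simp: isLo_def)

lemma hi_iff:
  assumes cq: "cq \<noteq> MInf"
  shows "(2 \<le> enc_qbar v \<and> geC (enc_qbar v) (enc_qbar cq)) \<longleftrightarrow> isHi (to_ereal cq) v"
proof (cases v)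
  case (Fin r)
  have e: "(2 \<le> enc_qbar (Fin r) \<and> geC (enc_qbar (Fin r)) (enc_qbar cq)) \<longleftrightarrow> to_ereal cq \<le> ereal (of_rat r)"
    using geC_Fin[OF cq, of r] by simp
  then show ?thesis using Fin by (simp add: isHi_def)
qed (auto simp: isHi_def)


section \<open>Correctness of the code-level procedure\<close>

definition chr_code :: "chr \<Rightarrow> nat" where
  "chr_code ch = (if cF ch then 1 else 0) + (if cN ch then 2 else 0) + (if cL ch then 4 else 0) + (if cH ch then 8 else 0)"

lemma chr_code_lt: "chr_code ch < 16"
  unfolding chr_code_def by simp

lemma chr_of_code: "chr_of_nat (chr_code ch) = ch"
proof (cases ch)
  case (Chr a b c d)
  then show ?thesis by (cases a; cases b; cases c; cases d) (simp_all add: chr_code_def chr_of_nat_def)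
qed

lemma code_of_chr: "n < 16 \<Longrightarrow> chr_code (chr_of_nat n) = n"
proof -
  assume "n < 16"
  then have "n = 0 \<or> n = 1 \<or> n = 2 \<or> n = 3 \<or> n = 4 \<or> n = 5 \<or> n = 6 \<or> n = 7 \<or> n = 8 \<or> n = 9 \<or> n = 10
      \<or> n = 11 \<or> n = 12 \<or> n = 13 \<or> n = 14 \<or> n = 15" by arith
  then show ?thesis by (elim disjE) (simp_all add: chr_code_def chr_of_nat_def)
qed

lemma chr_code_eq_iff: "n < 16 \<Longrightarrow> chr_code ch = n \<longleftrightarrow> ch = chr_of_nat n"
  using chr_of_code code_of_chr by metis

lemma ex_shift_Suc: "(\<exists>k<l. P (Suc k)) \<longleftrightarrow> (\<exists>k. 0 < k \<and> k \<le> l \<and> P k)"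
proof
  assume "\<exists>k<l. P (Suc k)" then show "\<exists>k. 0 < k \<and> k \<le> l \<and> P k" by (metis Suc_leI zero_less_Suc)
next
  assume "\<exists>k. 0 < k \<and> k \<le> l \<and> P k"
  then obtain k where "0 < k" "k \<le> l" "P k" by blast
  then have "k - 1 < l" "P (Suc (k - 1))" by auto
  then show "\<exists>k<l. P (Suc k)" by blast
qed

lemma segC_eq:
  assumes wf: "wf_wba A" and m: "0 < m" and cq: "cq \<noteq> MInf" and ns: "0 < nstates A"
  shows "segC m (enc_wba m A) (enc_qbar cq) x l r = chr_code (segchr A (to_ereal cq) (dig m x) (dig (nstates A) r) l)"
proof -
  have w: "wcode m (enc_wba m A) (dig (nstates A) r k) (dig m x k) (dig (nstates A) r (Suc k))
      = enc_qbar (wt A (dig (nstates A) r k) (dig m x k) (dig (nstates A) r (Suc k)))" for k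
    by (rule wcode_enc) (simp_all add: dig_lt[OF ns] dig_lt[OF m])
  have f: "(\<exists>k<l. lmem (lnth (enc_wba m A) 3) (dig (nstates A) r (Suc k))) \<longleftrightarrow>
      (\<exists>k. 0 < k \<and> k \<le> l \<and> dig (nstates A) r k \<in> fin A)"
    unfolding lmem_fin[OF wf] by (rule ex_shift_Suc)
  show ?thesis
    unfolding segC_def chr_code_def segchr_def chr.sel dec_wba(1) w f
    by (simp add: enc_qbar_0_iff lo_iff[OF cq] hi_iff[OF cq])
qed

lemma HSc_iff:
  assumes wf: "wf_wba A" and m: "0 < m" and cq: "cq \<noteq> MInf" and n: "n < 16"
  shows "HSc m (enc_wba m A) (enc_qbar cq) x l p q n \<longleftrightarrow> hs A (to_ereal cq) (dig m x) l p q (chr_of_nat n)"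
proof (cases "nstates A = 0")
  case True
  then show ?thesis unfolding HSc_def hs_def dec_wba(1) by auto
next
  case False
  then have ns: "0 < nstates A" by simp
  have seg: "segC m (enc_wba m A) (enc_qbar cq) x l r = n \<longleftrightarrow>
      segchr A (to_ereal cq) (dig m x) (dig (nstates A) r) l = chr_of_nat n" for r
    unfolding segC_eq[OF wf m cq ns] using chr_code_eq_iff[OF n] .
  show ?thesis
  proof
    assume "HSc m (enc_wba m A) (enc_qbar cq) x l p q n"
    then obtain r where r: "dig (nstates A) r 0 = p" "dig (nstates A) r l = q"
      "segC m (enc_wba m A) (enc_qbar cq) x l r = n"
      unfolding HSc_def dec_wba(1) by blast
    then show "hs A (to_ereal cq) (dig m x) l p q (chr_of_nat n)"
      unfolding hs_def seg using dig_lt[OF ns] by (intro exI[of _ "dig (nstates A) r"]) auto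
  next
    assume "hs A (to_ereal cq) (dig m x) l p q (chr_of_nat n)"
    then obtain rf where rf: "\<forall>k\<le>l. rf k < nstates A" "rf 0 = p" "rf l = q"
      "segchr A (to_ereal cq) (dig m x) rf l = chr_of_nat n" unfolding hs_def by blast
    have "\<forall>k<Suc l. rf k < nstates A" using rf(1) by auto
    from ex_code[OF ns this] obtain r where r: "r < nstates A ^ Suc l" "\<forall>k<Suc l. dig (nstates A) r k = rf k"
      by blast
    have "segchr A (to_ereal cq) (dig m x) (dig (nstates A) r) l = segchr A (to_ereal cq) (dig m x) rf l"
      using r(2) by (intro segchr_cong) auto
    then show "HSc m (enc_wba m A) (enc_qbar cq) x l p q n"
      unfolding HSc_def dec_wba(1) seg using r rf by (intro exI[of _ r]) auto
  qed
qed


lemma PEC_iff: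
  assumes wf: "wf_wba A" and m: "0 < m" and cq: "cq \<noteq> MInf"
  shows "PEC m (enc_wba m A) (enc_qbar cq) x lx y ly \<longleftrightarrow> hs A (to_ereal cq) (dig m x) lx = hs A (to_ereal cq) (dig m y) ly"
proof
  assume P: "PEC m (enc_wba m A) (enc_qbar cq) x lx y ly"
  show "hs A (to_ereal cq) (dig m x) lx = hs A (to_ereal cq) (dig m y) ly"
  proof (intro ext)
    fix p q ch
    show "hs A (to_ereal cq) (dig m x) lx p q ch = hs A (to_ereal cq) (dig m y) ly p q ch"
    proof (cases "p < nstates A \<and> q < nstates A")
      case True
      have "HSc m (enc_wba m A) (enc_qbar cq) x lx p q (chr_code ch) \<longleftrightarrow> HSc m (enc_wba m A) (enc_qbar cq) y ly p q (chr_code ch)"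
        using P True chr_code_lt[of ch] unfolding PEC_def dec_wba(1) by blast
      then show ?thesis using HSc_iff[OF wf m cq chr_code_lt] by (simp add: chr_of_code)
    next
      case False
      then show ?thesis using hs_lt by blast
    qed
  qed
next
  assume "hs A (to_ereal cq) (dig m x) lx = hs A (to_ereal cq) (dig m y) ly"
  then show "PEC m (enc_wba m A) (enc_qbar cq) x lx y ly"
    unfolding PEC_def using HSc_iff[OF wf m cq] by simp
qed

lemma idemC_iff:
  assumes wf: "wf_wba A" and m: "0 < m" and cq: "cq \<noteq> MInf" and u: "u < m ^ lu" and v: "v < m ^ lv"
  shows "idemC m (enc_wba m A) (enc_qbar cq) u lu v lv \<longleftrightarrow> idem A (to_ereal cq) (dig m u) lu (dig m v) lv"
  unfolding idemC_def idem_def PEC_iff[OF wf m cq] dig_cat_fun[OF m u] dig_cat_fun[OF m v] ..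

lemma AccC_iff:
  assumes wf: "wf_wba A" and m: "0 < m" and cq: "cq \<noteq> MInf"
  shows "AccC K m (enc_wba m A) (enc_qbar cq) u lu v lv \<longleftrightarrow>
    acc K A (hs A (to_ereal cq) (dig m u) lu) (hs A (to_ereal cq) (dig m v) lv)"
proof
  assume "AccC K m (enc_wba m A) (enc_qbar cq) u lu v lv"
  then have "\<exists>p<nstates A. lmem (lnth (enc_wba m A) 2) p \<and> (\<exists>q<nstates A. \<exists>na<16. \<exists>nb<16.
      HSc m (enc_wba m A) (enc_qbar cq) u lu p q na \<and> HSc m (enc_wba m A) (enc_qbar cq) v lv q q nb \<and>
      nb mod 2 = 1 \<and> na div 2 mod 2 = 0 \<and> nb div 2 mod 2 = 0 \<and> kcondC K na nb)"
    unfolding AccC_def dec_wba(1) .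
  then obtain p where h0': "p < nstates A \<and> lmem (lnth (enc_wba m A) 2) p \<and> (\<exists>q<nstates A. \<exists>na<16. \<exists>nb<16.
      HSc m (enc_wba m A) (enc_qbar cq) u lu p q na \<and> HSc m (enc_wba m A) (enc_qbar cq) v lv q q nb \<and>
      nb mod 2 = 1 \<and> na div 2 mod 2 = 0 \<and> nb div 2 mod 2 = 0 \<and> kcondC K na nb)"
    by (rule exE)
  then have h0: "lmem (lnth (enc_wba m A) 2) p" by (rule conjunct1[OF conjunct2])
  from h0' have "\<exists>q<nstates A. \<exists>na<16. \<exists>nb<16.
      HSc m (enc_wba m A) (enc_qbar cq) u lu p q na \<and> HSc m (enc_wba m A) (enc_qbar cq) v lv q q nb \<and>
      nb mod 2 = 1 \<and> na div 2 mod 2 = 0 \<and> nb div 2 mod 2 = 0 \<and> kcondC K na nb"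
    by (rule conjunct2[OF conjunct2])
  then obtain q na nb where h: "na < 16" "nb < 16"
    "HSc m (enc_wba m A) (enc_qbar cq) u lu p q na" "HSc m (enc_wba m A) (enc_qbar cq) v lv q q nb"
    "nb mod 2 = 1" "na div 2 mod 2 = 0" "nb div 2 mod 2 = 0" "kcondC K na nb"
    by (elim exE conjE) simp
  have p: "p \<in> init A" using h0 lmem_init[OF wf] by simp
  have "cF (chr_of_nat nb)" "\<not> cN (chr_of_nat na)" "\<not> cN (chr_of_nat nb)"
    using h(5-7) by (auto simp: chr_of_nat_def)
  moreover have "hs A (to_ereal cq) (dig m u) lu p q (chr_of_nat na)" using h(3) HSc_iff[OF wf m cq h(1)] by simp
  moreover have "hs A (to_ereal cq) (dig m v) lv q q (chr_of_nat nb)" using h(4) HSc_iff[OF wf m cq h(2)] by simp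
  moreover have "kcond K (chr_of_nat na) (chr_of_nat nb)" using h(8) unfolding kcondC_def .
  ultimately show "acc K A (hs A (to_ereal cq) (dig m u) lu) (hs A (to_ereal cq) (dig m v) lv)"
    unfolding acc_def using p by blast
next
  assume "acc K A (hs A (to_ereal cq) (dig m u) lu) (hs A (to_ereal cq) (dig m v) lv)"
  then obtain p q a b where h: "p \<in> init A" "hs A (to_ereal cq) (dig m u) lu p q a"
    "hs A (to_ereal cq) (dig m v) lv q q b" "cF b" "\<not> cN a" "\<not> cN b" "kcond K a b"
    unfolding acc_def by blast
  have p: "p < nstates A" "lmem (lnth (enc_wba m A) 2) p"
    using h(1) wf lmem_init[OF wf] unfolding wf_wba_def by auto
  have q: "q < nstates A" using hs_lt[OF h(3)] by simp
  have b1: "chr_code b mod 2 = 1" "chr_code a div 2 mod 2 = 0" "chr_code b div 2 mod 2 = 0"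
    using h(4-6) by (auto simp: chr_code_def)
  have "HSc m (enc_wba m A) (enc_qbar cq) u lu p q (chr_code a)"
    using h(2) HSc_iff[OF wf m cq chr_code_lt[of a]] by (simp add: chr_of_code)
  moreover have "HSc m (enc_wba m A) (enc_qbar cq) v lv q q (chr_code b)"
    using h(3) HSc_iff[OF wf m cq chr_code_lt[of b]] by (simp add: chr_of_code)
  moreover have "kcondC K (chr_code a) (chr_code b)" using h(7) by (simp add: kcondC_def chr_of_code)
  ultimately have X: "HSc m (enc_wba m A) (enc_qbar cq) u lu p q (chr_code a) \<and>
      HSc m (enc_wba m A) (enc_qbar cq) v lv q q (chr_code b) \<and> chr_code b mod 2 = 1 \<and>
      chr_code a div 2 mod 2 = 0 \<and> chr_code b div 2 mod 2 = 0 \<and> kcondC K (chr_code a) (chr_code b)"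
    using b1 by simp
  show "AccC K m (enc_wba m A) (enc_qbar cq) u lu v lv"
    unfolding AccC_def dec_wba(1)
    apply (rule exI[where x=p], rule conjI, rule p(1), rule conjI, rule p(2))
    apply (rule exI[where x=q], rule conjI, rule q)
    apply (rule exI[where x="chr_code a"], rule conjI, rule chr_code_lt)
    apply (rule exI[where x="chr_code b"], rule conjI, rule chr_code_lt)
    by (rule X)
qed


definition Gsem :: "valuation_kind \<Rightarrow> wba \<Rightarrow> wba \<Rightarrow> ereal \<Rightarrow> (nat \<Rightarrow> nat) \<Rightarrow> nat \<Rightarrow> (nat \<Rightarrow> nat) \<Rightarrow> nat \<Rightarrow> bool" where
  "Gsem K N N' c uf lu vf lv \<longleftrightarrow> (idem N c uf lu vf lv \<longrightarrow> idem N' c uf lu vf lv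
      \<longrightarrow> acc K N (hs N c uf lu) (hs N c vf lv) \<longrightarrow> acc K N' (hs N' c uf lu) (hs N' c vf lv))"

lemma Gsem_cong:
  assumes "\<forall>k<lu. uf k = uf' k" "\<forall>k<lv. vf k = vf' k"
  shows "Gsem K N N' c uf lu vf lv = Gsem K N N' c uf' lu vf' lv"
proof -
  have "hs A c uf lu = hs A c uf' lu" "hs A c vf lv = hs A c vf' lv" for A
    using assms by (auto intro: hs_cong)
  then show ?thesis unfolding Gsem_def idem_iff by simp
qed

lemma Q_iff:
  assumes m: "0 < m" and wf: "wf_wba N" "wf_wba N'" and cq: "cq \<noteq> MInf"
  shows "(\<forall>lu<B + 1. \<forall>u<m ^ lu. \<forall>lv<B + 1. \<forall>v<m ^ lv. 1 \<le> lu \<longrightarrow> 1 \<le> lv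
       \<longrightarrow> idemC m (enc_wba m N) (enc_qbar cq) u lu v lv \<longrightarrow> idemC m (enc_wba m N') (enc_qbar cq) u lu v lv
       \<longrightarrow> AccC K m (enc_wba m N) (enc_qbar cq) u lu v lv \<longrightarrow> AccC K m (enc_wba m N') (enc_qbar cq) u lu v lv)
    \<longleftrightarrow> (\<forall>uf lu vf lv. 1 \<le> lu \<longrightarrow> lu \<le> B \<longrightarrow> 1 \<le> lv \<longrightarrow> lv \<le> B \<longrightarrow> (\<forall>k<lu. uf k < m)
       \<longrightarrow> (\<forall>k<lv. vf k < m) \<longrightarrow> Gsem K N N' (to_ereal cq) uf lu vf lv)"
  (is "?L \<longleftrightarrow> ?R")
proof -
  have step: "(idemC m (enc_wba m N) (enc_qbar cq) u lu v lv \<longrightarrow> idemC m (enc_wba m N') (enc_qbar cq) u lu v lv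
       \<longrightarrow> AccC K m (enc_wba m N) (enc_qbar cq) u lu v lv \<longrightarrow> AccC K m (enc_wba m N') (enc_qbar cq) u lu v lv)
     \<longleftrightarrow> Gsem K N N' (to_ereal cq) (dig m u) lu (dig m v) lv" if "u < m ^ lu" "v < m ^ lv" for u lu v lv
    unfolding Gsem_def idemC_iff[OF wf(1) m cq that] idemC_iff[OF wf(2) m cq that]
      AccC_iff[OF wf(1) m cq] AccC_iff[OF wf(2) m cq] ..
  have L: "?L \<longleftrightarrow> (\<forall>lu<B + 1. \<forall>u<m ^ lu. \<forall>lv<B + 1. \<forall>v<m ^ lv. 1 \<le> lu \<longrightarrow> 1 \<le> lv
       \<longrightarrow> Gsem K N N' (to_ereal cq) (dig m u) lu (dig m v) lv)"
    using step by auto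
  show ?thesis
  proof
    assume ?L
    then have L': "\<And>lu u lv v. lu < B + 1 \<Longrightarrow> u < m ^ lu \<Longrightarrow> lv < B + 1 \<Longrightarrow> v < m ^ lv \<Longrightarrow> 1 \<le> lu \<Longrightarrow> 1 \<le> lv
       \<Longrightarrow> Gsem K N N' (to_ereal cq) (dig m u) lu (dig m v) lv" using L by blast
    show ?R
    proof (intro allI impI)
      fix uf lu vf lv
      assume h: "1 \<le> lu" "lu \<le> B" "1 \<le> lv" "lv \<le> B" "\<forall>k<lu. uf k < m" "\<forall>k<lv. vf k < m"
      obtain u where u: "u < m ^ lu" "\<forall>k<lu. dig m u k = uf k" using ex_code[OF m h(5)] by blast
      obtain v where v: "v < m ^ lv" "\<forall>k<lv. dig m v k = vf k" using ex_code[OF m h(6)] by blast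
      have "Gsem K N N' (to_ereal cq) (dig m u) lu (dig m v) lv" using L' h u v by simp
      then show "Gsem K N N' (to_ereal cq) uf lu vf lv" using Gsem_cong[OF u(2) v(2)] by simp
    qed
  next
    assume R: ?R
    have "Gsem K N N' (to_ereal cq) (dig m u) lu (dig m v) lv"
      if "lu < B + 1" "lv < B + 1" "1 \<le> lu" "1 \<le> lv" for u lu v lv
      using R that dig_lt[OF m] by simp
    then show ?L unfolding L by simp
  qed
qed

lemma Phi_m0: "Phi K 0 x"
  unfolding Phi_def
proof (intro allI impI)
  fix idx lu u lv v :: nat
  assume "u < 0 ^ lu" "1 \<le> lu"
  then have False by (cases lu) auto
  then show "AccC K 0 (psnd x) (thrC 0 (pfst x) idx) u lu v lv" ..
qed

lemma enc_pair_dec: "pfst (enc_pair m N N') = enc_wba m N" "psnd (enc_pair m N N') = enc_wba m N'"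
  unfolding enc_pair_def by simp_all

lemma thr_quant:
  fixes Q :: "nat \<Rightarrow> bool"
  shows "(\<forall>idx<nstates N * m * nstates N + 1. thrC m (enc_wba m N) idx \<noteq> 0 \<longrightarrow> Q (thrC m (enc_wba m N) idx))
     \<longleftrightarrow> (\<forall>cq\<in>insert PInf (Wset N m). cq \<noteq> MInf \<longrightarrow> Q (enc_qbar cq))"
proof -
  have t: "thrC m (enc_wba m N) idx = (if idx < length (WL m N) then WL m N ! idx else 1)" for idx
    unfolding thrC_def dec_wba using lnth_enc[of idx "WL m N"] length_WL[of m N] by auto
  have "(\<forall>idx<nstates N * m * nstates N + 1. thrC m (enc_wba m N) idx \<noteq> 0 \<longrightarrow> Q (thrC m (enc_wba m N) idx))
      \<longleftrightarrow> (\<forall>y\<in>set (WL m N). y \<noteq> 0 \<longrightarrow> Q y) \<and> Q 1"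
  proof
    assume H: "\<forall>idx<nstates N * m * nstates N + 1. thrC m (enc_wba m N) idx \<noteq> 0 \<longrightarrow> Q (thrC m (enc_wba m N) idx)"
    have "Q 1" using H[rule_format, of "length (WL m N)"] unfolding t length_WL by simp
    moreover have "\<forall>y\<in>set (WL m N). y \<noteq> 0 \<longrightarrow> Q y"
    proof (intro ballI impI)
      fix y assume "y \<in> set (WL m N)" "y \<noteq> 0"
      then obtain i where "i < length (WL m N)" "WL m N ! i = y" by (auto simp: in_set_conv_nth)
      then show "Q y" using H[rule_format, of i] \<open>y \<noteq> 0\<close> unfolding t length_WL by simp
    qed
    ultimately show "(\<forall>y\<in>set (WL m N). y \<noteq> 0 \<longrightarrow> Q y) \<and> Q 1" by blast
  next
    assume "(\<forall>y\<in>set (WL m N). y \<noteq> 0 \<longrightarrow> Q y) \<and> Q 1"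
    then show "\<forall>idx<nstates N * m * nstates N + 1. thrC m (enc_wba m N) idx \<noteq> 0 \<longrightarrow> Q (thrC m (enc_wba m N) idx)"
      unfolding t by (auto simp: length_WL)
  qed
  also have "\<dots> \<longleftrightarrow> (\<forall>cq\<in>insert PInf (Wset N m). cq \<noteq> MInf \<longrightarrow> Q (enc_qbar cq))"
  proof -
    have pos: "0 < enc_qbar v \<longleftrightarrow> v \<noteq> MInf" for v by (cases v) auto
    show ?thesis
    proof
      assume H: "(\<forall>y\<in>set (WL m N). y \<noteq> 0 \<longrightarrow> Q y) \<and> Q 1"
      show "\<forall>cq\<in>insert PInf (Wset N m). cq \<noteq> MInf \<longrightarrow> Q (enc_qbar cq)"
      proof (intro ballI impI)
        fix cq assume "cq \<in> insert PInf (Wset N m)" "cq \<noteq> MInf"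
        then consider "cq = PInf" | q a p where "q < nstates N" "a < m" "p < nstates N" "cq = wt N q a p"
          unfolding Wset_def by blast
        then show "Q (enc_qbar cq)"
        proof cases
          case 1 then show ?thesis using H by simp
        next
          case 2
          then have "enc_qbar cq \<in> set (WL m N)" unfolding set_WL by blast
          moreover have "enc_qbar cq \<noteq> 0" using \<open>cq \<noteq> MInf\<close> enc_qbar_0_iff by blast
          ultimately show ?thesis using H by blast
        qed
      qed
    next
      assume H: "\<forall>cq\<in>insert PInf (Wset N m). cq \<noteq> MInf \<longrightarrow> Q (enc_qbar cq)"
      have "Q 1" using H by (metis enc_qbar.simps(2) insertI1 qbar.distinct(3))
      moreover have "\<forall>y\<in>set (WL m N). y \<noteq> 0 \<longrightarrow> Q y"
      proof (intro ballI impI)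
        fix y assume "y \<in> set (WL m N)" "y \<noteq> 0"
        then obtain q a p where qap: "q < nstates N" "a < m" "p < nstates N" and y: "y = enc_qbar (wt N q a p)"
          unfolding set_WL by blast
        have w1: "wt N q a p \<in> Wset N m" unfolding Wset_def using qap by blast
        have w2: "wt N q a p \<noteq> MInf"
        proof
          assume "wt N q a p = MInf"
          then show False using \<open>y \<noteq> 0\<close> y by simp
        qed
        show "Q y" using H w1 w2 y by blast
      qed
      ultimately show "(\<forall>y\<in>set (WL m N). y \<noteq> 0 \<longrightarrow> Q y) \<and> Q 1" by blast
    qed
  qed
  finally show ?thesis .
qed

theorem Phi_correct:
  assumes wf: "wf_wba N" "wf_wba N'"
  shows "Phi K m (enc_pair m N N') \<longleftrightarrow> (\<forall>w. (\<forall>i. w i < m) \<longrightarrow> behavior K N w \<le> behavior K N' w)"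
proof (cases "m = 0")
  case True
  then show ?thesis using Phi_m0 by simp
next
  case False
  then have m: "0 < m" by simp
  define B where "B = (2::nat) ^ (32 * (nstates N + nstates N') * (nstates N + nstates N'))"
  have "Phi K m (enc_pair m N N') \<longleftrightarrow> (\<forall>cq\<in>insert PInf (Wset N m). cq \<noteq> MInf \<longrightarrow>
     (\<forall>lu<B + 1. \<forall>u<m ^ lu. \<forall>lv<B + 1. \<forall>v<m ^ lv. 1 \<le> lu \<longrightarrow> 1 \<le> lv
       \<longrightarrow> idemC m (enc_wba m N) (enc_qbar cq) u lu v lv \<longrightarrow> idemC m (enc_wba m N') (enc_qbar cq) u lu v lv
       \<longrightarrow> AccC K m (enc_wba m N) (enc_qbar cq) u lu v lv \<longrightarrow> AccC K m (enc_wba m N') (enc_qbar cq) u lu v lv))"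
    unfolding Phi_def enc_pair_dec dec_wba(1) B_def by (rule thr_quant)
  also have "\<dots> \<longleftrightarrow> (\<forall>cq\<in>insert PInf (Wset N m). cq \<noteq> MInf \<longrightarrow>
      (\<forall>uf lu vf lv. 1 \<le> lu \<longrightarrow> lu \<le> B \<longrightarrow> 1 \<le> lv \<longrightarrow> lv \<le> B \<longrightarrow> (\<forall>k<lu. uf k < m)
       \<longrightarrow> (\<forall>k<lv. vf k < m) \<longrightarrow> Gsem K N N' (to_ereal cq) uf lu vf lv))"
    using Q_iff[OF m wf] by simp
  also have "\<dots> \<longleftrightarrow> (\<forall>cq\<in>insert PInf (Wset N m). cq \<noteq> MInf \<longrightarrow>
      (\<forall>w. (\<forall>i. w i < m) \<longrightarrow> Lw K N (to_ereal cq) w \<longrightarrow> Lw K N' (to_ereal cq) w))"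
    using thr_equiv[OF wf, of m K] unfolding Gsem_def B_def by simp
  also have "\<dots> \<longleftrightarrow> (\<forall>c\<in>insert \<infinity> (to_ereal ` Wset N m). c \<noteq> - \<infinity> \<longrightarrow>
      (\<forall>w. (\<forall>i. w i < m) \<longrightarrow> Lw K N c w \<longrightarrow> Lw K N' c w))"
    by auto
  also have "\<dots> \<longleftrightarrow> (\<forall>w. (\<forall>i. w i < m) \<longrightarrow> behavior K N w \<le> behavior K N' w)"
    by (rule incl_thr[symmetric])
  finally show ?thesis .
qed

theorem theorem7:
  fixes m :: nat and K :: valuation_kind
  shows "\<exists>f. \<forall>N N'. wf_wba N \<and> wf_wba N' \<longrightarrow>
           eval_recf f [enc_pair m N N']
             (if \<forall>w. (\<forall>i. w i < m) \<longrightarrow> behavior K N w \<le> behavior K N' w then 1 else 0)"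
proof -
  obtain f where f: "\<forall>x. eval_recf f [x] (if Phi K m x then 1 else 0)" using Phi_computable by blast
  show ?thesis
  proof (intro exI allI impI)
    fix N N' assume "wf_wba N \<and> wf_wba N'"
    then have "Phi K m (enc_pair m N N') \<longleftrightarrow> (\<forall>w. (\<forall>i. w i < m) \<longrightarrow> behavior K N w \<le> behavior K N' w)"
      using Phi_correct by blast
    then show "eval_recf f [enc_pair m N N']
             (if \<forall>w. (\<forall>i. w i < m) \<longrightarrow> behavior K N w \<le> behavior K N' w then 1 else 0)"
      using f[rule_format, of "enc_pair m N N'"] by simp
  qed
qed

end
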